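(* $\mathrm{FindWS}_\mathcal{A} \equiv_W \mathrm{Det}_\mathcal{A} \equiv_W \mathrm{C}_{\{0,1\}^\mathbb{N}}$.
   Context: Represented spaces: a represented space is $(X,\delta_X)$ with $\delta_X:\subseteq\mathbb{N}^\mathbb{N}\to X$ a partial surjection. For a partial multivalued $f:\subseteq X\rightrightarrows Y$, a realizer is a partial $F:\subseteq\mathbb{N}^\mathbb{N}\to\mathbb{N}^\mathbb{N}$ with $\delta_Y(F(p))\in f(\delta_X(p))$ whenever $\delta_X(p)\in\mathrm{dom}(f)$. Weihrauch reducibility: $f\leq_W g$ iff there are computable partial $K,H:\subseteq\mathbb{N}^\mathbb{N}\to\mathbb{N}^\mathbb{N}$ such that for every realizer $G$ of $g$, the map $p\mapsto K(\langle p, G(H(p))\rangle)$ is a realizer of $f$; $\equiv_W$ is the induced equivalence. Open subsets of $\{0,1\}^\mathbb{N}$ are named by enumerations of words $w$ with $U=\bigcup w\{0,1\}^\mathbb{N}$; closed sets are named by names of their complements; $\mathcal{A}$ denotes the closed sets with this representation. $\mathrm{C}_{\{0,1\}^\mathbb{N}}$ (closed choice) maps a nonempty closed $A\subseteq\{0,1\}^\mathbb{N}$ to any element of $A$. Games: all games use choice set $\{0,1\}$. A win/lose game has two players (player 1 and player 2), a turn function $d:\{0,1\}^*\to\{1,2\}$ (given as a lookup table), and a winning set $W\subseteq\{0,1\}^\mathbb{N}$ for player 1 (player 2 wins on the complement). A strategy profile is a function $s:\{0,1\}^*\to\{0,1\}$ (identified with an element of $\{0,1\}^\mathbb{N}$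 via a computable bijection $\{0,1\}^*\cong\mathbb{N}$); player $i$'s strategy is its restriction to $d^{-1}(i)$; the induced play $p$ satisfies $p_n=s(p_{<n})$. A strategy of a player is winning if every play consistent with it is won by that player. For a represented pointclass $\Gamma$, $\mathrm{Det}_\Gamma$ takes a win/lose game whose winning set for player 1 is given by a $\Gamma$-name, and outputs any Nash equilibrium, i.e.~any strategy profile in which one of the two strategies is winning. $\mathrm{FindWS}_\Gamma$ is the restriction of $\mathrm{Det}_\Gamma$ to games in which player 1 has a winning strategy. *)

theory Defs
  imports Main "HOL-Library.Nat_Bijection"
begin

datatype recf = Zr | Sc | Proj nat | Comp recf "recf list" | Prim recf recf | Mu recf

inductive eval_rf :: "recf \<Rightarrow> nat list \<Rightarrow> nat \<Rightarrow> bool" where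
  zr: "eval_rf Zr xs 0"
| sc: "eval_rf Sc (x # xs) (Suc x)"
| proj: "i < length xs \<Longrightarrow> eval_rf (Proj i) xs (xs ! i)"
| comp: "list_all2 (\<lambda>g y. eval_rf g xs y) gs ys \<Longrightarrow> eval_rf f ys z \<Longrightarrow> eval_rf (Comp f gs) xs z"
| prim0: "eval_rf f xs y \<Longrightarrow> eval_rf (Prim f g) (0 # xs) y"
| primS: "eval_rf (Prim f g) (n # xs) y \<Longrightarrow> eval_rf g (n # y # xs) z \<Longrightarrow> eval_rf (Prim f g) (Suc n # xs) z"
| mu: "eval_rf f (y # xs) 0 \<Longrightarrow> (\<forall>z<y. \<exists>v. 0 < v \<and> eval_rf f (z # xs) v) \<Longrightarrow> eval_rf (Mu f) xs y"

definition comp_wordfun :: "(nat list \<Rightarrow> nat list) \<Rightarrow> bool" where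
  "comp_wordfun h \<longleftrightarrow> (\<exists>f. \<forall>xs. eval_rf f [list_encode xs] (list_encode (h xs)))"

type_synonym baire = "nat \<Rightarrow> nat"

definition pre :: "baire \<Rightarrow> nat \<Rightarrow> nat list" where
  "pre p n = map p [0..<n]"

definition computable_on :: "baire set \<Rightarrow> (baire \<Rightarrow> baire) \<Rightarrow> bool" where
  "computable_on D F \<longleftrightarrow> (\<exists>h. comp_wordfun h \<and>
     (\<forall>p\<in>D. (\<forall>n. h (pre p n) = pre (F p) (length (h (pre p n))))
            \<and> (\<forall>k. \<exists>n. k \<le> length (h (pre p n)))))"

definition pcomputable :: "(baire \<Rightarrow> baire option) \<Rightarrow> bool" where
  "pcomputable H \<longleftrightarrow> computable_on {p. H p \<noteq> None} (\<lambda>p. the (H p))"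

definition bpair :: "baire \<Rightarrow> baire \<Rightarrow> baire" where
  "bpair p q n = (if even n then p (n div 2) else q (n div 2))"

text \<open>A representation is a partial map from Baire space (None = not a name);
a multivalued partial function f has domain {x. f x \<noteq> {}}.\<close>
type_synonym 'a rep = "baire \<Rightarrow> 'a option"

definition realizer :: "'a rep \<Rightarrow> 'b rep \<Rightarrow> ('a \<Rightarrow> 'b set) \<Rightarrow> (baire \<Rightarrow> baire option) \<Rightarrow> bool" where
  "realizer \<delta>X \<delta>Y f F \<longleftrightarrow> (\<forall>p x. \<delta>X p = Some x \<and> f x \<noteq> {} \<longrightarrow>
      (\<exists>q y. F p = Some q \<and> \<delta>Y q = Some y \<and> y \<in> f x))"

definition W_le :: "'a rep \<Rightarrow> 'b rep \<Rightarrow> ('a \<Rightarrow> 'b set) \<Rightarrow> 'c rep \<Rightarrow> 'd rep \<Rightarrow> ('c \<Rightarrow> 'd set) \<Rightarrow> bool" where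
  "W_le \<delta>X \<delta>Y f \<delta>U \<delta>V g \<longleftrightarrow> (\<exists>K H. pcomputable K \<and> pcomputable H \<and>
     (\<forall>G. realizer \<delta>U \<delta>V g G \<longrightarrow>
        realizer \<delta>X \<delta>Y f (\<lambda>p. case H p of None \<Rightarrow> None | Some q \<Rightarrow>
                                (case G q of None \<Rightarrow> None | Some r \<Rightarrow> K (bpair p r)))))"

definition W_eq :: "'a rep \<Rightarrow> 'b rep \<Rightarrow> ('a \<Rightarrow> 'b set) \<Rightarrow> 'c rep \<Rightarrow> 'd rep \<Rightarrow> ('c \<Rightarrow> 'd set) \<Rightarrow> bool" where
  "W_eq \<delta>X \<delta>Y f \<delta>U \<delta>V g \<longleftrightarrow> W_le \<delta>X \<delta>Y f \<delta>U \<delta>V g \<and> W_le \<delta>U \<delta>V g \<delta>X \<delta>Y f"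

text \<open>Computable bijection between binary words and nat (bijective base-2 numeration).\<close>
definition bcode :: "bool list \<Rightarrow> nat" where
  "bcode w = foldl (\<lambda>n b. 2 * n + (if b then 2 else 1)) 0 w"

definition delta_C :: "(nat \<Rightarrow> bool) rep" where
  "delta_C p = (if \<forall>n. p n \<le> 1 then Some (\<lambda>n. p n = 1) else None)"

definition cyl :: "bool list \<Rightarrow> (nat \<Rightarrow> bool) set" where
  "cyl w = {x. \<forall>i<length w. x i = w ! i}"

text \<open>p enumerates words: p n = 0 means no word, p n = Suc (bcode w) enumerates w.
The named closed set is the complement of the union of the enumerated cylinders.\<close>
definition open_of :: "baire \<Rightarrow> (nat \<Rightarrow> bool) set" where
  "open_of p = \<Union>{cyl w | w. \<exists>n. p n = Suc (bcode w)}"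

definition delta_A :: "(nat \<Rightarrow> bool) set rep" where
  "delta_A p = Some (- open_of p)"

text \<open>Closed choice on Cantor space: nonempty closed A \<mapsto> any element of A.\<close>
definition CC :: "(nat \<Rightarrow> bool) set \<Rightarrow> (nat \<Rightarrow> bool) set" where
  "CC A = A"

datatype player = P1 | P2

type_synonym game = "(bool list \<Rightarrow> player) \<times> (nat \<Rightarrow> bool) set"
type_synonym profile = "bool list \<Rightarrow> bool"

text \<open>A game name is a pair of a lookup table for the turn function (values 1,2 at
position bcode w) and a closed-name of player 1's winning set.\<close>
definition delta_game :: "game rep" where
  "delta_game r = (if \<forall>n. r (2 * n) \<in> {1, 2}
     then Some ((\<lambda>w. if r (2 * bcode w) = 1 then P1 else P2), - open_of (\<lambda>n. r (2 * n + 1)))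
     else None)"

text \<open>Strategy profiles, identified with {0,1}^N via bcode.\<close>
definition delta_prof :: "profile rep" where
  "delta_prof p = (if \<forall>n. p n \<le> 1 then Some (\<lambda>w. p (bcode w) = 1) else None)"

definition consistent :: "(bool list \<Rightarrow> player) \<Rightarrow> profile \<Rightarrow> player \<Rightarrow> (nat \<Rightarrow> bool) \<Rightarrow> bool" where
  "consistent d s i x \<longleftrightarrow> (\<forall>n. d (map x [0..<n]) = i \<longrightarrow> x n = s (map x [0..<n]))"

definition wins :: "(nat \<Rightarrow> bool) set \<Rightarrow> player \<Rightarrow> (nat \<Rightarrow> bool) \<Rightarrow> bool" where
  "wins W i x \<longleftrightarrow> (if i = P1 then x \<in> W else x \<notin> W)"

text \<open>Player i's strategy (s restricted to d^-1(i)) is winning.\<close>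
definition winning :: "game \<Rightarrow> profile \<Rightarrow> player \<Rightarrow> bool" where
  "winning G s i \<longleftrightarrow> (\<forall>x. consistent (fst G) s i x \<longrightarrow> wins (snd G) i x)"

definition Det_A :: "game \<Rightarrow> profile set" where
  "Det_A G = {s. winning G s P1 \<or> winning G s P2}"

definition FindWS_A :: "game \<Rightarrow> profile set" where
  "FindWS_A G = (if \<exists>s. winning G s P1 then Det_A G else {})"

end

theory Submission
  imports Defs
begin


definition rc1 :: "(nat \<Rightarrow> nat) \<Rightarrow> bool" where
  "rc1 f \<longleftrightarrow> (\<exists>F. \<forall>x. eval_rf F [x] (f x))"
definition rc2 :: "(nat \<Rightarrow> nat \<Rightarrow> nat) \<Rightarrow> bool" where
  "rc2 f \<longleftrightarrow> (\<exists>F. \<forall>x y. eval_rf F [x,y] (f x y))"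

fun cnst :: "nat \<Rightarrow> recf" where
  "cnst 0 = Zr" | "cnst (Suc n) = Comp Sc [cnst n]"

lemma eval_cnst: "eval_rf (cnst n) xs n"
  by (induction n) (auto intro: eval_rf.intros)

lemma ev_comp1: "eval_rf G xs y \<Longrightarrow> eval_rf F [y] z \<Longrightarrow> eval_rf (Comp F [G]) xs z"
  by (rule eval_rf.comp[of _ _ "[y]"]) auto
lemma ev_comp2: "eval_rf G xs y \<Longrightarrow> eval_rf H xs y' \<Longrightarrow> eval_rf F [y,y'] z \<Longrightarrow> eval_rf (Comp F [G,H]) xs z"
  by (rule eval_rf.comp[of _ _ "[y,y']"]) auto
lemma ev_proj: "i < length xs \<Longrightarrow> z = xs ! i \<Longrightarrow> eval_rf (Proj i) xs z"
  using eval_rf.proj by blast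

lemma rc1_const: "rc1 (\<lambda>x. c)"
  unfolding rc1_def using eval_cnst by blast
lemma rc2_const: "rc2 (\<lambda>x y. c)"
  unfolding rc2_def using eval_cnst by blast
lemma rc1_id: "rc1 (\<lambda>x. x)"
  unfolding rc1_def by (rule exI[of _ "Proj 0"]) (auto intro: eval_rf.proj[of 0 "[_]", simplified])
lemma rc2_p1: "rc2 (\<lambda>x y. x)"
  unfolding rc2_def by (rule exI[of _ "Proj 0"]) (auto intro: eval_rf.proj[of 0 "[_,_]", simplified])
lemma rc2_p2: "rc2 (\<lambda>x y. y)"
  unfolding rc2_def by (rule exI[of _ "Proj 1"]) (auto intro: eval_rf.proj[of 1 "[_,_]", simplified])

lemma rc1_Suc: "rc1 Suc"
  unfolding rc1_def by (rule exI[of _ Sc]) (auto intro: eval_rf.intros)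

lemma rc1_comp1: "rc1 f \<Longrightarrow> rc1 a \<Longrightarrow> rc1 (\<lambda>x. f (a x))"
  unfolding rc1_def apply clarify
  subgoal for F A by (rule exI[of _ "Comp F [A]"]) (blast intro: ev_comp1 ev_comp2)
  done
lemma rc1_comp2: "rc2 f \<Longrightarrow> rc1 a \<Longrightarrow> rc1 b \<Longrightarrow> rc1 (\<lambda>x. f (a x) (b x))"
  unfolding rc1_def rc2_def apply clarify
  subgoal for F A B by (rule exI[of _ "Comp F [A,B]"]) (blast intro: ev_comp1 ev_comp2)
  done
lemma rc2_comp1: "rc1 f \<Longrightarrow> rc2 a \<Longrightarrow> rc2 (\<lambda>x y. f (a x y))"
  unfolding rc1_def rc2_def apply clarify
  subgoal for F A by (rule exI[of _ "Comp F [A]"]) (blast intro: ev_comp1 ev_comp2)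
  done
lemma rc2_comp2: "rc2 f \<Longrightarrow> rc2 a \<Longrightarrow> rc2 b \<Longrightarrow> rc2 (\<lambda>x y. f (a x y) (b x y))"
  unfolding rc2_def apply clarify
  subgoal for F A B by (rule exI[of _ "Comp F [A,B]"]) (blast intro: ev_comp1 ev_comp2)
  done

lemma rc1_prim: assumes "rc2 g" shows "rc1 (\<lambda>n. rec_nat c g n)"
proof -
  obtain G where G: "\<And>x y. eval_rf G [x,y] (g x y)" using assms unfolding rc2_def by blast
  have "eval_rf (Prim (cnst c) G) [n] (rec_nat c g n)" for n
  proof (induction n)
    case 0 then show ?case using eval_rf.prim0[of "cnst c" "[]"] eval_cnst by simp
  next
    case (Suc n) then show ?case using eval_rf.primS[of "cnst c" G n "[]"] G by simp
  qed
  then show ?thesis unfolding rc1_def by blast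
qed

lemma rc2_iter: assumes "rc1 T" shows "rc2 (\<lambda>n y. (T ^^ n) y)"
proof -
  obtain F where F: "\<And>x. eval_rf F [x] (T x)" using assms unfolding rc1_def by blast
  have P0: "eval_rf (Proj 0) [y] y" for y using eval_rf.proj[of 0 "[y]"] by simp
  have P1: "eval_rf (Proj 1) [n, a, y] a" for n a y using eval_rf.proj[of 1 "[n,a,y]"] by simp
  have "eval_rf (Prim (Proj 0) (Comp F [Proj 1])) [n, y] ((T ^^ n) y)" for n y
  proof (induction n)
    case 0 then show ?case using eval_rf.prim0[of "Proj 0" "[y]" y] P0 by simp
  next
    case (Suc n) 
    have "eval_rf (Comp F [Proj 1]) [n, (T ^^ n) y, y] (T ((T ^^ n) y))"
      by (rule ev_comp1[OF P1 F])
    then show ?case using eval_rf.primS[OF Suc] by simp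
  qed
  then show ?thesis unfolding rc2_def by blast
qed

lemma rc2_add: "rc2 (+)"
proof -
  have "rc2 (\<lambda>n y. (Suc ^^ n) y)" by (rule rc2_iter[OF rc1_Suc])
  moreover have "(Suc ^^ n) y = n + y" for n y by (induction n) auto
  ultimately show ?thesis by simp
qed

lemma rc1_pred: "rc1 (\<lambda>n. n - 1)"
proof -
  have "rc1 (\<lambda>n. rec_nat 0 (\<lambda>k a. k) n)" by (rule rc1_prim[OF rc2_p1])
  moreover have "rec_nat 0 (\<lambda>k a. k) n = n - 1" for n by (cases n) auto
  ultimately show ?thesis by simp
qed

lemma rc2_sub: "rc2 (-)"
proof -
  have "rc2 (\<lambda>n y. ((\<lambda>n. n - 1) ^^ n) y)" by (rule rc2_iter[OF rc1_pred])
  moreover have "((\<lambda>n. n - 1) ^^ n) y = y - n" for n y by (induction n) auto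
  ultimately have "rc2 (\<lambda>n y. y - n)" by simp
  from rc2_comp2[OF this rc2_p2 rc2_p1] show ?thesis by simp
qed

lemma rc2_mult: "rc2 (*)"
proof -
  obtain A where A: "\<And>x y. eval_rf A [x,y] (x + y)" using rc2_add unfolding rc2_def by blast
  have P: "eval_rf (Proj i) xs (xs ! i)" if "i < length xs" for i xs using eval_rf.proj that by blast
  have "eval_rf (Prim Zr (Comp A [Proj 1, Proj 2])) [n, y] (n * y)" for n y
  proof (induction n)
    case 0 then show ?case using eval_rf.prim0[of Zr "[y]" 0] eval_rf.zr by simp
  next
    case (Suc n)
    have "eval_rf (Comp A [Proj 1, Proj 2]) [n, n*y, y] (n * y + y)"
      by (rule eval_rf.comp[of _ _ "[n*y, y]"]) (auto simp: A P[of 1 "[n, n*y, y]", simplified] P[of 2 "[n, n*y, y]", simplified])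
    then show ?case using eval_rf.primS[OF Suc] by (simp add: add.commute)
  qed
  then show ?thesis unfolding rc2_def by blast
qed

lemma rc2_swap: "rc2 f \<Longrightarrow> rc2 (\<lambda>x y. f y x)"
  using rc2_comp2[OF _ rc2_p2 rc2_p1] by blast

definition pf :: "nat \<Rightarrow> nat" where "pf n = fst (prod_decode n)"
definition ps :: "nat \<Rightarrow> nat" where "ps n = snd (prod_decode n)"
definition pe :: "nat \<Rightarrow> nat \<Rightarrow> nat" where "pe a b = prod_encode (a, b)"

lemma pf_pe[simp]: "pf (pe a b) = a" and ps_pe[simp]: "ps (pe a b) = b"
  by (simp_all add: pf_def ps_def pe_def)
lemma pf_pe'[simp]: "pf (prod_encode (a, b)) = a" and ps_pe'[simp]: "ps (prod_encode (a, b)) = b"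
  by (simp_all add: pf_def ps_def)
lemma pe_inj[simp]: "pe a b = pe c d \<longleftrightarrow> a = c \<and> b = d"
  by (simp add: pe_def)
lemma pe_pf_ps[simp]: "pe (pf n) (ps n) = n"
  by (simp add: pf_def ps_def pe_def)
lemma pe_ge1: "a \<le> pe a b" and pe_ge2: "b \<le> pe a b"
  by (simp_all add: pe_def le_prod_encode_1 le_prod_encode_2)
lemma pe_mono: "a \<le> c \<Longrightarrow> b \<le> d \<Longrightarrow> pe a b \<le> pe c d"
proof -
  assume "a \<le> c" "b \<le> d"
  moreover have "triangle m \<le> triangle n" if "m \<le> n" for m n
    using that by (induction n) (auto simp: le_Suc_eq)
  ultimately have "triangle (a+b) \<le> triangle (c+d)" by simp
  then show ?thesis using \<open>a \<le> c\<close> by (simp add: pe_def prod_encode_def)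
qed

lemma rc2_tri: "rc1 triangle"
proof -
  have "rc2 (\<lambda>k a. a + Suc k)" by (rule rc2_comp2[OF rc2_add rc2_p2 rc2_comp1[OF rc1_Suc rc2_p1]])
  from rc1_prim[OF this, of 0] have "rc1 (rec_nat 0 (\<lambda>k a. a + Suc k))" by simp
  moreover have "rec_nat 0 (\<lambda>k a. a + Suc k) = triangle" by (rule ext, induct_tac x) auto
  ultimately show ?thesis by simp
qed

lemma rc2_le: "rc2 (\<lambda>x y. if x \<le> y then 1 else 0)"
proof -
  have "rc2 (\<lambda>x y. 1 - (x - y))" by (rule rc2_comp2[OF rc2_sub rc2_const rc2_sub])
  moreover have "(1::nat) - (x - y) = (if x \<le> y then 1 else 0)" for x y :: nat by auto
  ultimately show ?thesis by simp
qed

lemma rc2_if: "rc2 p \<Longrightarrow> rc2 a \<Longrightarrow> rc2 b \<Longrightarrow> (\<And>x y. p x y \<le> 1) \<Longrightarrow>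
   rc2 (\<lambda>x y. if p x y = 1 then a x y else b x y)"
proof -
  assume r: "rc2 p" "rc2 a" "rc2 b" and p1: "\<And>x y. p x y \<le> 1"
  have "rc2 (\<lambda>x y. p x y * a x y + (1 - p x y) * b x y)"
    by (intro rc2_comp2[OF rc2_add] rc2_comp2[OF rc2_mult] rc2_comp2[OF rc2_sub] r rc2_const)
  moreover have "p x y * a x y + (1 - p x y) * b x y = (if p x y = 1 then a x y else b x y)" for x y
    using p1[of x y] by (cases "p x y") auto
  ultimately show ?thesis by simp
qed

lemma rc2_ifP: "rc2 (\<lambda>x y. if P x y then 1 else 0) \<Longrightarrow> rc2 a \<Longrightarrow> rc2 b \<Longrightarrow>
   rc2 (\<lambda>x y. if P x y then a x y else b x y)"
proof -
  assume r: "rc2 (\<lambda>x y. if P x y then 1 else 0)" "rc2 a" "rc2 b"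
  have "rc2 (\<lambda>x y. if (if P x y then 1 else 0) = (1::nat) then a x y else b x y)"
    by (rule rc2_if[OF r]) simp
  moreover have "(\<lambda>x y. if (if P x y then 1 else 0) = (1::nat) then a x y else b x y) = (\<lambda>x y. if P x y then a x y else b x y)"
    by (simp add: fun_eq_iff)
  ultimately show ?thesis by simp
qed

definition ssq :: "nat \<Rightarrow> nat" where
  "ssq = rec_nat 0 (\<lambda>k acc. if triangle (Suc acc) \<le> Suc k then Suc acc else acc)"

lemma ssq_prop: "triangle (ssq n) \<le> n \<and> n < triangle (Suc (ssq n))"
proof (induction n)
  case 0 then show ?case by (simp add: ssq_def)
next
  case (Suc n)
  have e: "ssq (Suc n) = (if triangle (Suc (ssq n)) \<le> Suc n then Suc (ssq n) else ssq n)"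
    by (simp add: ssq_def)
  show ?case
  proof (cases "triangle (Suc (ssq n)) \<le> Suc n")
    case True
    then have "ssq (Suc n) = Suc (ssq n)" using e by simp
    moreover have "triangle (Suc (ssq n)) = Suc n" using True Suc.IH by simp
    ultimately show ?thesis by simp
  next
    case False
    then have "ssq (Suc n) = ssq n" using e by simp
    then show ?thesis using False Suc.IH by simp
  qed
qed

lemma rc1_ssq: "rc1 ssq"
proof -
  have "rc2 (\<lambda>k acc. if triangle (Suc acc) \<le> Suc k then Suc acc else acc)"
    apply (rule rc2_ifP)
       apply (rule rc2_comp2[OF rc2_le])
        apply (rule rc2_comp1[OF rc2_tri]) apply (rule rc2_comp1[OF rc1_Suc rc2_p2])
       apply (rule rc2_comp1[OF rc1_Suc rc2_p1])
      apply (rule rc2_comp1[OF rc1_Suc rc2_p2])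
     by (rule rc2_p2)
  from rc1_prim[OF this, of 0] show ?thesis unfolding ssq_def .
qed

lemma pdec_ssq: "prod_decode n = (n - triangle (ssq n), ssq n - (n - triangle (ssq n)))"
proof -
  let ?s = "ssq n" let ?a = "n - triangle ?s"
  have h: "triangle ?s \<le> n" "n < triangle ?s + Suc ?s" using ssq_prop[of n] by auto
  then have "?a \<le> ?s" by linarith
  then have "prod_encode (?a, ?s - ?a) = n" using h by (simp add: prod_encode_def)
  from arg_cong[OF this, of prod_decode] show ?thesis by simp
qed

lemma rc1_pf: "rc1 pf"
proof -
  have "rc1 (\<lambda>n. n - triangle (ssq n))"
    by (rule rc1_comp2[OF rc2_sub rc1_id rc1_comp1[OF rc2_tri rc1_ssq]])
  moreover have "pf = (\<lambda>n. n - triangle (ssq n))" by (rule ext) (simp add: pf_def pdec_ssq)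
  ultimately show ?thesis by simp
qed

lemma rc1_ps: "rc1 ps"
proof -
  have "rc1 (\<lambda>n. ssq n - (n - triangle (ssq n)))"
    by (rule rc1_comp2[OF rc2_sub rc1_ssq rc1_comp2[OF rc2_sub rc1_id rc1_comp1[OF rc2_tri rc1_ssq]]])
  moreover have "ps = (\<lambda>n. ssq n - (n - triangle (ssq n)))" by (rule ext) (simp add: ps_def pdec_ssq)
  ultimately show ?thesis by simp
qed

lemma rc2_pe: "rc2 pe"
proof -
  have "rc2 (\<lambda>a b. triangle (a + b) + a)"
    by (rule rc2_comp2[OF rc2_add rc2_comp1[OF rc2_tri rc2_add] rc2_p1])
  moreover have "pe = (\<lambda>a b. triangle (a + b) + a)" by (simp add: fun_eq_iff pe_def prod_encode_def)
  ultimately show ?thesis by simp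
qed

definition rcb :: "(nat \<Rightarrow> bool) \<Rightarrow> bool" where
  "rcb P \<longleftrightarrow> rc1 (\<lambda>x. if P x then 1 else 0)"

lemma rc1_Suc': "rc1 a \<Longrightarrow> rc1 (\<lambda>x. Suc (a x))" by (rule rc1_comp1[OF rc1_Suc])
lemma rc1_add: "rc1 a \<Longrightarrow> rc1 b \<Longrightarrow> rc1 (\<lambda>x. a x + b x)" by (rule rc1_comp2[OF rc2_add])
lemma rc1_sub: "rc1 a \<Longrightarrow> rc1 b \<Longrightarrow> rc1 (\<lambda>x. a x - b x)" by (rule rc1_comp2[OF rc2_sub])
lemma rc1_mult: "rc1 a \<Longrightarrow> rc1 b \<Longrightarrow> rc1 (\<lambda>x. a x * b x)" by (rule rc1_comp2[OF rc2_mult])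
lemma rc1_pe: "rc1 a \<Longrightarrow> rc1 b \<Longrightarrow> rc1 (\<lambda>x. pe (a x) (b x))" by (rule rc1_comp2[OF rc2_pe])
lemma rc1_pf': "rc1 a \<Longrightarrow> rc1 (\<lambda>x. pf (a x))" by (rule rc1_comp1[OF rc1_pf])
lemma rc1_ps': "rc1 a \<Longrightarrow> rc1 (\<lambda>x. ps (a x))" by (rule rc1_comp1[OF rc1_ps])

lemma rc1_if: "rcb P \<Longrightarrow> rc1 a \<Longrightarrow> rc1 b \<Longrightarrow> rc1 (\<lambda>x. if P x then a x else b x)"
proof -
  assume r: "rcb P" "rc1 a" "rc1 b"
  have "rc1 (\<lambda>x. (if P x then 1 else 0) * a x + (1 - (if P x then 1 else 0)) * b x)"
    using r unfolding rcb_def by (intro rc1_add rc1_mult rc1_sub rc1_const)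
  moreover have "(\<lambda>x. (if P x then 1 else 0) * a x + (1 - (if P x then 1 else 0)) * b x) = (\<lambda>x. if P x then a x else b x)"
    by (simp add: fun_eq_iff)
  ultimately show ?thesis by simp
qed

lemma rcb_le: "rc1 a \<Longrightarrow> rc1 b \<Longrightarrow> rcb (\<lambda>x. a x \<le> b x)"
  unfolding rcb_def by (rule rc1_comp2[OF rc2_le])
lemma rcb_True: "rcb (\<lambda>x. True)" unfolding rcb_def by (simp add: rc1_const)
lemma rcb_False: "rcb (\<lambda>x. False)" unfolding rcb_def by (simp add: rc1_const)
lemma rcb_not: "rcb P \<Longrightarrow> rcb (\<lambda>x. \<not> P x)"
proof -
  assume "rcb P"
  then have "rc1 (\<lambda>x. 1 - (if P x then 1 else 0))" unfolding rcb_def by (intro rc1_sub rc1_const)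
  moreover have "(\<lambda>x. 1 - (if P x then 1 else 0)) = (\<lambda>x. if \<not> P x then 1 else (0::nat))" by (simp add: fun_eq_iff)
  ultimately show ?thesis unfolding rcb_def by simp
qed
lemma rcb_conj: "rcb P \<Longrightarrow> rcb Q \<Longrightarrow> rcb (\<lambda>x. P x \<and> Q x)"
proof -
  assume "rcb P" "rcb Q"
  then have "rc1 (\<lambda>x. (if P x then 1 else 0) * (if Q x then 1 else 0))" unfolding rcb_def by (intro rc1_mult)
  moreover have "(\<lambda>x. (if P x then 1 else 0) * (if Q x then 1 else 0)) = (\<lambda>x. if P x \<and> Q x then 1 else (0::nat))" by (simp add: fun_eq_iff)
  ultimately show ?thesis unfolding rcb_def by simp
qed
lemma rcb_disj: "rcb P \<Longrightarrow> rcb Q \<Longrightarrow> rcb (\<lambda>x. P x \<or> Q x)"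
proof -
  assume "rcb P" "rcb Q"
  then have "rcb (\<lambda>x. \<not> (\<not> P x \<and> \<not> Q x))" by (intro rcb_not rcb_conj)
  then show ?thesis by simp
qed
lemma rcb_imp: "rcb P \<Longrightarrow> rcb Q \<Longrightarrow> rcb (\<lambda>x. P x \<longrightarrow> Q x)"
proof -
  assume "rcb P" "rcb Q"
  then have "rcb (\<lambda>x. \<not> P x \<or> Q x)" by (intro rcb_not rcb_disj)
  then show ?thesis by simp
qed
lemma rcb_iff: "rcb P \<Longrightarrow> rcb Q \<Longrightarrow> rcb (\<lambda>x. P x \<longleftrightarrow> Q x)"
proof -
  assume "rcb P" "rcb Q"
  then have "rcb (\<lambda>x. (P x \<longrightarrow> Q x) \<and> (Q x \<longrightarrow> P x))" by (intro rcb_imp rcb_conj)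
  moreover have "(\<lambda>x. (P x \<longrightarrow> Q x) \<and> (Q x \<longrightarrow> P x)) = (\<lambda>x. P x \<longleftrightarrow> Q x)" by (auto simp: fun_eq_iff)
  ultimately show ?thesis by simp
qed
lemma rcb_less: "rc1 a \<Longrightarrow> rc1 b \<Longrightarrow> rcb (\<lambda>x. a x < b x)"
proof -
  assume "rc1 a" "rc1 b"
  then have "rcb (\<lambda>x. Suc (a x) \<le> b x)" by (intro rcb_le rc1_Suc')
  then show ?thesis by (simp add: Suc_le_eq)
qed
lemma rcb_eq: "rc1 a \<Longrightarrow> rc1 b \<Longrightarrow> rcb (\<lambda>x. a x = b x)"
proof -
  assume "rc1 a" "rc1 b"
  then have "rcb (\<lambda>x. a x \<le> b x \<and> b x \<le> a x)" by (intro rcb_le rcb_conj)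
  then show ?thesis by (simp add: eq_iff[symmetric])
qed

lemma rc1_iterp:
  assumes S: "rc1 (\<lambda>p. S (pf p) (ps p))" and N: "rc1 N" and I: "rc1 I"
  shows "rc1 (\<lambda>x. (S x ^^ N x) (I x))"
proof -
  define T where "T p = pe (pf p) (S (pf p) (ps p))" for p
  have T: "rc1 T" unfolding T_def by (intro rc1_pe rc1_pf S)
  have it: "(T ^^ n) (pe x a) = pe x ((S x ^^ n) a)" for n x a
    by (induction n) (auto simp: T_def)
  have "rc1 (\<lambda>x. ps ((T ^^ N x) (pe x (I x))))"
    by (intro rc1_ps' rc1_comp2[OF rc2_iter[OF T]] N rc1_pe rc1_id I)
  then show ?thesis by (simp add: it)
qed

lemma rc1_app2:
  assumes f: "rc1 (\<lambda>p. f (pf p) (ps p))" and "rc1 a" "rc1 b"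
  shows "rc1 (\<lambda>x. f (a x) (b x))"
proof -
  have "rc1 (\<lambda>x. (\<lambda>p. f (pf p) (ps p)) (pe (a x) (b x)))"
    by (rule rc1_comp1[OF f]) (intro rc1_pe assms)
  then show ?thesis by simp
qed

lemma rc1_sum:
  assumes f: "rc1 (\<lambda>p. f (pf p) (ps p))" and N: "rc1 N"
  shows "rc1 (\<lambda>x. \<Sum>k<N x. f x k)"
proof -
  define S where "S x st = pe (Suc (pf st)) (ps st + f x (pf st))" for x st
  have it: "(S x ^^ n) (pe 0 0) = pe n (\<Sum>k<n. f x k)" for x n
    by (induction n) (auto simp: S_def)
  have f2: "rc1 (\<lambda>p. f (pf p) (pf (ps p)))"
    by (rule rc1_app2[OF f]) (intro rc1_pf' rc1_ps' rc1_id)+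
  have "rc1 (\<lambda>x. ps ((S x ^^ N x) (pe 0 0)))"
    unfolding S_def by (intro rc1_ps' rc1_iterp N rc1_const rc1_pe rc1_Suc' rc1_pf' rc1_ps' rc1_add rc1_id f2)
  then show ?thesis by (simp add: it)
qed

lemma rc1_build:
  assumes f: "rc1 (\<lambda>p. f (pf p) (ps p))" and N: "rc1 N"
  shows "rc1 (\<lambda>x. list_encode (map (f x) [0..<N x]))"
proof -
  define S where "S x st = pe (pf st - 1) (Suc (pe (f x (pf st - 1)) (ps st)))" for x st
  have it: "j \<le> n \<Longrightarrow> (S x ^^ j) (pe n 0) = pe (n - j) (list_encode (map (f x) [n-j..<n]))" for x n j
  proof (induction j)
    case 0 then show ?case by simp
  next
    case (Suc j)
    then have "n - j = Suc (n - Suc j)" by simp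
    then have "[n - Suc j..<n] = (n - Suc j) # [n - j..<n]" by (simp add: upt_conv_Cons)
    then show ?case using Suc by (simp add: S_def pe_def)
  qed
  have f2: "rc1 (\<lambda>p. f (pf p) (pf (ps p) - 1))"
    by (rule rc1_app2[OF f]) (intro rc1_pf' rc1_ps' rc1_id rc1_sub rc1_const)+
  have "rc1 (\<lambda>x. ps ((S x ^^ N x) (pe (N x) 0)))"
    unfolding S_def by (intro rc1_ps' rc1_iterp N rc1_const rc1_pe rc1_Suc' rc1_pf' rc1_ps' rc1_sub rc1_id f2)
  then show ?thesis by (simp add: it)
qed

lemmas rcI = rc1_id rc1_const rc1_Suc' rc1_add rc1_sub rc1_mult rc1_pe rc1_pf' rc1_ps' rc1_if
  rcb_le rcb_less rcb_eq rcb_True rcb_False rcb_not rcb_conj rcb_disj rcb_imp rcb_iff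

definition half :: "nat \<Rightarrow> nat" where
  "half n = pf (((\<lambda>p. if ps p = 1 then pe (Suc (pf p)) 0 else pe (pf p) 1) ^^ n) (pe 0 0))"

lemma half_eq: "half n = n div 2"
proof -
  have "((\<lambda>p. if ps p = 1 then pe (Suc (pf p)) 0 else pe (pf p) 1) ^^ n) (pe 0 0) = pe (n div 2) (n mod 2)"
    by (induction n) (auto simp: mod_Suc div_Suc)
  then show ?thesis by (simp add: half_def)
qed

lemma rc1_half: "rc1 (\<lambda>n. n div 2)"
proof -
  have "rc1 half" unfolding half_def
    by (rule rc1_pf'[OF rc1_iterp[where S="\<lambda>_. _"]]) (intro rcI)+
  then show ?thesis by (simp add: half_eq[abs_def])
qed

lemma rc1_div2: "rc1 a \<Longrightarrow> rc1 (\<lambda>x. a x div 2)" by (rule rc1_comp1[OF rc1_half])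
lemma rcb_even: "rc1 a \<Longrightarrow> rcb (\<lambda>x. even (a x))"
proof -
  assume "rc1 a"
  then have "rcb (\<lambda>x. 2 * (a x div 2) = a x)" by (intro rcI rc1_div2)
  moreover have "2 * (n div 2) = n \<longleftrightarrow> even n" for n :: nat by presburger
  ultimately show ?thesis by simp
qed

lemmas rcI2 = rcI rc1_div2 rcb_even



definition ltl :: "nat \<Rightarrow> nat" where "ltl c = ps (c - 1)"
definition lhd :: "nat \<Rightarrow> nat" where "lhd c = pf (c - 1)"
definition lnth :: "nat \<Rightarrow> nat \<Rightarrow> nat" where "lnth c i = lhd ((ltl ^^ i) c)"
definition llen :: "nat \<Rightarrow> nat" where "llen c = (\<Sum>k<c. if (ltl ^^ k) c = 0 then 0 else 1)"

lemma ps0[simp]: "ps 0 = 0" by (simp add: ps_def prod_decode_def prod_decode_aux.simps)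
lemma lhd_Suc[simp]: "lhd (Suc (prod_encode (a, b))) = a" by (simp add: lhd_def)
lemma ltl_code[simp]: "ltl (list_encode xs) = list_encode (tl xs)"
  by (cases xs) (auto simp: ltl_def)
lemma lhd_code[simp]: "lhd (list_encode (x # xs)) = x"
  by (simp add: lhd_def)
lemma ltl_iter: "(ltl ^^ i) (list_encode xs) = list_encode (drop i xs)"
  by (induction i arbitrary: xs) (auto simp: drop_Suc funpow_swap1 tl_drop)
lemma lnth_code: "i < length xs \<Longrightarrow> lnth (list_encode xs) i = xs ! i"
  by (simp add: lnth_def ltl_iter Cons_nth_drop_Suc[symmetric])
lemma len_le_code: "length xs \<le> list_encode xs"
proof (induction xs)
  case (Cons x xs)
  then show ?case using le_prod_encode_2[of "list_encode xs" x] le_prod_encode_2[of x "list_encode xs"] by simp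
qed simp
lemma code_0: "list_encode xs = 0 \<longleftrightarrow> xs = []"
  by (cases xs) auto
lemma llen_code: "llen (list_encode xs) = length xs"
proof -
  have "llen (list_encode xs) = (\<Sum>k<list_encode xs. if k < length xs then 1 else 0)"
    unfolding llen_def ltl_iter code_0 by (intro sum.cong) auto
  also have "\<dots> = card ({..<list_encode xs} \<inter> {k. k < length xs})"
    by (simp add: sum.If_cases)
  also have "{..<list_encode xs} \<inter> {k. k < length xs} = {..<length xs}"
    using len_le_code[of xs] by auto
  finally show ?thesis by simp
qed

lemma rc1_ltl: "rc1 a \<Longrightarrow> rc1 (\<lambda>x. ltl (a x))" unfolding ltl_def by (intro rcI)
lemma rc1_lhd: "rc1 a \<Longrightarrow> rc1 (\<lambda>x. lhd (a x))" unfolding lhd_def by (intro rcI)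
lemma rc1_ltl_iter: "rc1 a \<Longrightarrow> rc1 b \<Longrightarrow> rc1 (\<lambda>x. (ltl ^^ b x) (a x))"
  by (rule rc1_iterp[where S="\<lambda>_. ltl"]) (intro rc1_ltl rcI)+
lemma rc1_lnth: "rc1 a \<Longrightarrow> rc1 b \<Longrightarrow> rc1 (\<lambda>x. lnth (a x) (b x))"
  unfolding lnth_def by (intro rc1_lhd rc1_ltl_iter)
lemma rc1_llen: "rc1 a \<Longrightarrow> rc1 (\<lambda>x. llen (a x))"
proof -
  assume a: "rc1 a"
  have "rc1 llen" unfolding llen_def
    by (rule rc1_sum[where f="\<lambda>c k. if (ltl ^^ k) c = 0 then 0 else 1"]) (rule rc1_if, rule rcb_eq, rule rc1_ltl_iter, rule rc1_pf'[OF rc1_id], rule rc1_ps'[OF rc1_id], rule rc1_const, rule rc1_const, rule rc1_const, rule rc1_id)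
  then show ?thesis using rc1_comp1 a by blast
qed

lemmas rcI3 = rcI2 rc1_ltl rc1_lhd rc1_ltl_iter rc1_lnth rc1_llen

lemma cw_rc: "rc1 hc \<Longrightarrow> (\<And>xs. hc (list_encode xs) = list_encode (h xs)) \<Longrightarrow> comp_wordfun h"
proof -
  assume "rc1 hc" "\<And>xs. hc (list_encode xs) = list_encode (h xs)"
  then obtain F where "\<And>x. eval_rf F [x] (hc x)" unfolding rc1_def by blast
  then show ?thesis unfolding comp_wordfun_def using \<open>\<And>xs. hc (list_encode xs) = list_encode (h xs)\<close> by metis
qed

definition wf_ok :: "(nat list \<Rightarrow> nat list) \<Rightarrow> (baire \<Rightarrow> baire) \<Rightarrow> bool" where
  "wf_ok h F \<longleftrightarrow> comp_wordfun h \<and> (\<forall>p n. h (pre p n) = pre (F p) (length (h (pre p n))))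
     \<and> (\<forall>p k. \<exists>n. k \<le> length (h (pre p n)))
     \<and> (\<forall>p m n. m \<le> n \<longrightarrow> length (h (pre p m)) \<le> length (h (pre p n)))"

lemma wf_ok_computable: "wf_ok h F \<Longrightarrow> computable_on D F"
  unfolding wf_ok_def computable_on_def by (intro exI[of _ h]) simp

lemma wf_ok_pcomp: "wf_ok h F \<Longrightarrow> pcomputable (\<lambda>p. Some (F p))"
  unfolding pcomputable_def by (simp add: wf_ok_computable)

lemma length_pre[simp]: "length (pre p n) = n" by (simp add: pre_def)
lemma pre_nth[simp]: "i < n \<Longrightarrow> pre p n ! i = p i" by (simp add: pre_def)

lemma wf_ok_comp:
  assumes 1: "wf_ok h1 F1" and 2: "wf_ok h2 F2"
  shows "wf_ok (\<lambda>xs. h2 (h1 xs)) (\<lambda>p. F2 (F1 p))"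
proof -
  from 1 obtain f1 where f1: "\<And>xs. eval_rf f1 [list_encode xs] (list_encode (h1 xs))"
    unfolding wf_ok_def comp_wordfun_def by blast
  from 2 obtain f2 where f2: "\<And>xs. eval_rf f2 [list_encode xs] (list_encode (h2 xs))"
    unfolding wf_ok_def comp_wordfun_def by blast
  have cw: "comp_wordfun (\<lambda>xs. h2 (h1 xs))"
    unfolding comp_wordfun_def using ev_comp1[OF f1 f2] by blast
  have e1: "h1 (pre p n) = pre (F1 p) (length (h1 (pre p n)))" for p n using 1 unfolding wf_ok_def by blast
  have e2: "h2 (pre q n) = pre (F2 q) (length (h2 (pre q n)))" for q n using 2 unfolding wf_ok_def by blast
  have m1: "m \<le> n \<Longrightarrow> length (h1 (pre p m)) \<le> length (h1 (pre p n))" for p m n using 1 unfolding wf_ok_def by blast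
  have m2: "m \<le> n \<Longrightarrow> length (h2 (pre p m)) \<le> length (h2 (pre p n))" for p m n using 2 unfolding wf_ok_def by blast
  have u1: "\<exists>n. k \<le> length (h1 (pre p n))" for p k using 1 unfolding wf_ok_def by blast
  have u2: "\<exists>n. k \<le> length (h2 (pre p n))" for p k using 2 unfolding wf_ok_def by blast
  have pre: "h2 (h1 (pre p n)) = pre (F2 (F1 p)) (length (h2 (h1 (pre p n))))" for p n
    by (subst (1 2) e1) (rule e2)
  have mono: "m \<le> n \<Longrightarrow> length (h2 (h1 (pre p m))) \<le> length (h2 (h1 (pre p n)))" for p m n
    by (subst (1 2) e1) (rule m2[OF m1])
  have unb: "\<exists>n. k \<le> length (h2 (h1 (pre p n)))" for p k
  proof -
    obtain l where l: "k \<le> length (h2 (pre (F1 p) l))" using u2 by blast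
    obtain n where n: "l \<le> length (h1 (pre p n))" using u1 by blast
    have "k \<le> length (h2 (pre (F1 p) (length (h1 (pre p n)))))" using m2[OF n, of "F1 p"] l by simp
    then show ?thesis by (subst (asm) e1[symmetric]) blast
  qed
  show ?thesis unfolding wf_ok_def using cw pre mono unb by blast
qed

lemma lnth_pre: "j < n \<Longrightarrow> lnth (list_encode (pre p n)) j = p j"
  by (simp add: lnth_code)
lemma llen_pre[simp]: "llen (list_encode (pre p n)) = n"
  by (simp add: llen_code)

lemma wf_map:
  fixes Ob :: "(nat \<Rightarrow> nat) \<Rightarrow> nat \<Rightarrow> nat" and Lc :: "nat \<Rightarrow> nat"
  assumes rOb: "rc1 (\<lambda>q. Ob (lnth (pf q)) (ps q))" and rL: "rc1 Lc"
  and dep: "\<And>p n i. i < Lc (list_encode (pre p n)) \<Longrightarrow> Ob (lnth (list_encode (pre p n))) i = Ob p i"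
  and mono: "\<And>p m n. m \<le> n \<Longrightarrow> Lc (list_encode (pre p m)) \<le> Lc (list_encode (pre p n))"
  and unb: "\<And>p k. \<exists>n. k \<le> Lc (list_encode (pre p n))"
  shows "wf_ok (\<lambda>xs. map (Ob (lnth (list_encode xs))) [0..<Lc (list_encode xs)]) Ob"
proof -
  have "rc1 (\<lambda>c. list_encode (map (Ob (lnth c)) [0..<Lc c]))"
    by (rule rc1_build[OF rOb rL])
  then have cw: "comp_wordfun (\<lambda>xs. map (Ob (lnth (list_encode xs))) [0..<Lc (list_encode xs)])"
    by (rule cw_rc) simp
  have "map (Ob (lnth (list_encode (pre p n)))) [0..<Lc (list_encode (pre p n))]
        = pre (Ob p) (Lc (list_encode (pre p n)))" for p n
    unfolding pre_def[of "Ob p"] using dep by (intro map_cong) auto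
  then show ?thesis unfolding wf_ok_def using cw mono unb by simp
qed



definition odds_h :: "nat list \<Rightarrow> nat list" where
  "odds_h xs = map ((\<lambda>lk i. lk (2*i+1)) (lnth (list_encode xs))) [0..<(\<lambda>c. llen c div 2) (list_encode xs)]"

lemma odds_ok: "wf_ok odds_h (\<lambda>lk i. lk (2*i+1))"
  unfolding odds_h_def
proof (rule wf_map)
  show "rc1 (\<lambda>q. lnth (pf q) (2 * ps q + 1))" by (intro rcI3)
  show "rc1 (\<lambda>c. llen c div 2)" by (intro rcI3)
  show "i < llen (list_encode (pre p n)) div 2 \<Longrightarrow> lnth (list_encode (pre p n)) (2 * i + 1) = p (2 * i + 1)" for p n i
    by (simp add: lnth_pre)
  show "m \<le> n \<Longrightarrow> llen (list_encode (pre p m)) div 2 \<le> llen (list_encode (pre p n)) div 2" for p m n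
    by (simp add: div_le_mono)
  show "\<exists>n. k \<le> llen (list_encode (pre p n)) div 2" for p k
    by (rule exI[of _ "2*k"]) simp
qed

definition evens_h :: "nat list \<Rightarrow> nat list" where
  "evens_h xs = map ((\<lambda>lk i. lk (2*i)) (lnth (list_encode xs))) [0..<(\<lambda>c. (llen c + 1) div 2) (list_encode xs)]"

lemma evens_ok: "wf_ok evens_h (\<lambda>lk i. lk (2*i))"
  unfolding evens_h_def
proof (rule wf_map)
  show "rc1 (\<lambda>q. lnth (pf q) (2 * ps q))" by (intro rcI3)
  show "rc1 (\<lambda>c. (llen c + 1) div 2)" by (intro rcI3)
  show "i < (llen (list_encode (pre p n)) + 1) div 2 \<Longrightarrow> lnth (list_encode (pre p n)) (2 * i) = p (2 * i)" for p n i
    by (simp add: lnth_pre)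
  show "m \<le> n \<Longrightarrow> (llen (list_encode (pre p m)) + 1) div 2 \<le> (llen (list_encode (pre p n)) + 1) div 2" for p m n
    by (simp add: div_le_mono)
  show "\<exists>n. k \<le> (llen (list_encode (pre p n)) + 1) div 2" for p k
    by (rule exI[of _ "2*k"]) simp
qed

definition il_h :: "nat list \<Rightarrow> nat list" where
  "il_h xs = map ((\<lambda>lk i. if even i then 1 else lk (i div 2)) (lnth (list_encode xs))) [0..<(\<lambda>c. 2 * llen c) (list_encode xs)]"

lemma il_ok: "wf_ok il_h (\<lambda>lk i. if even i then 1 else lk (i div 2))"
  unfolding il_h_def
proof (rule wf_map)
  show "rc1 (\<lambda>q. if even (ps q) then 1 else lnth (pf q) (ps q div 2))" by (intro rcI3)
  show "rc1 (\<lambda>c. 2 * llen c)" by (intro rcI3)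
  show "i < 2 * llen (list_encode (pre p n)) \<Longrightarrow> (if even i then 1 else lnth (list_encode (pre p n)) (i div 2)) = (if even i then 1 else p (i div 2))" for p n i
    by (simp add: lnth_pre)
  show "m \<le> n \<Longrightarrow> 2 * llen (list_encode (pre p m)) \<le> 2 * llen (list_encode (pre p n))" for p m n
    by simp
  show "\<exists>n. k \<le> 2 * llen (list_encode (pre p n))" for p k
    by (rule exI[of _ "k"]) simp
qed

definition pstep :: "(nat \<Rightarrow> nat) \<Rightarrow> nat \<Rightarrow> nat" where
  "pstep lk c = 2*c + (if lk c = 1 then 2 else 1)"
definition pcl :: "(nat \<Rightarrow> nat) \<Rightarrow> nat \<Rightarrow> nat" where
  "pcl lk i = (pstep lk ^^ i) 0"
definition play_o :: "(nat \<Rightarrow> nat) \<Rightarrow> nat \<Rightarrow> nat" where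
  "play_o lk i = (if lk (pcl lk i) = 1 then 1 else 0)"
definition play_L :: "nat \<Rightarrow> nat" where
  "play_L c = (\<Sum>k<llen c. if pcl (lnth c) k < llen c then 1 else 0)"
definition play_h :: "nat list \<Rightarrow> nat list" where
  "play_h xs = map (play_o (lnth (list_encode xs))) [0..<play_L (list_encode xs)]"

lemma pcl_Suc: "pcl lk (Suc k) = pstep lk (pcl lk k)"
  by (simp add: pcl_def)
lemma pcl_lt_Suc: "pcl lk k < pcl lk (Suc k)"
  by (simp add: pcl_Suc pstep_def)
lemma pcl_mono: "k \<le> l \<Longrightarrow> pcl lk k \<le> pcl lk l"
  using pcl_lt_Suc by (metis dual_order.strict_implies_order lift_Suc_mono_le)
lemma pcl_ge: "k \<le> pcl lk k"
proof (induction k)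
  case (Suc k) then show ?case using pcl_lt_Suc[of lk k] by simp
qed simp

lemma pcl_agree:
  assumes "\<forall>j<n. lk j = lk' j"
  shows "pcl lk k < n \<or> pcl lk' k < n \<Longrightarrow> pcl lk k = pcl lk' k"
proof (induction k)
  case 0 then show ?case by (simp add: pcl_def)
next
  case (Suc k)
  have "pcl lk k < n \<or> pcl lk' k < n" using Suc.prems pcl_lt_Suc[of lk k] pcl_lt_Suc[of lk' k] by auto
  then have e: "pcl lk k = pcl lk' k" using Suc.IH by blast
  then have "pcl lk k < n" using \<open>pcl lk k < n \<or> pcl lk' k < n\<close> by auto
  then have "lk (pcl lk k) = lk' (pcl lk' k)" using assms e by auto
  then show ?case using e by (simp add: pcl_Suc pstep_def)
qed

definition cnt :: "(nat \<Rightarrow> nat) \<Rightarrow> nat \<Rightarrow> nat" where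
  "cnt lk n = card {k. pcl lk k < n}"

lemma cnt_set: "{k. pcl lk k < n} \<subseteq> {..<n}"
  using pcl_ge[of _ lk] by (auto intro: le_less_trans)

lemma play_L_pre: "play_L (list_encode (pre p n)) = cnt p n"
proof -
  let ?lk = "lnth (list_encode (pre p n))"
  have ag: "\<forall>j<n. p j = ?lk j" by (simp add: lnth_pre)
  have "play_L (list_encode (pre p n)) = (\<Sum>k<n. if pcl ?lk k < n then 1 else 0)"
    by (simp add: play_L_def)
  also have "\<dots> = card ({..<n} \<inter> {k. pcl ?lk k < n})" by (simp add: sum.If_cases)
  also have "{..<n} \<inter> {k. pcl ?lk k < n} = {k. pcl p k < n}"
  proof -
    have eq: "pcl p k < n \<longleftrightarrow> pcl ?lk k < n" for k using pcl_agree[OF ag, of k] by auto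
    show ?thesis using cnt_set[of p n] by (auto simp: eq)
  qed
  finally show ?thesis by (simp add: cnt_def)
qed

lemma cnt_char: "i < cnt lk n \<Longrightarrow> pcl lk i < n"
proof (rule ccontr)
  assume i: "i < cnt lk n" and "\<not> pcl lk i < n"
  then have "{k. pcl lk k < n} \<subseteq> {..<i}" using pcl_mono[of i _ lk] by (auto simp: not_less) (meson le_trans not_le)
  then have "cnt lk n \<le> i" unfolding cnt_def using card_mono[OF finite_lessThan] by fastforce
  then show False using i by simp
qed

lemma play_ok: "wf_ok play_h play_o"
  unfolding play_h_def
proof (rule wf_map)
  show "rc1 (\<lambda>q. play_o (lnth (pf q)) (ps q))" unfolding play_o_def pcl_def pstep_def
    by (intro rcI3 rc1_iterp[where S="\<lambda>q c. 2*c + (if lnth (pf q) c = 1 then 2 else 1)"])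
  show "rc1 play_L" unfolding play_L_def pcl_def pstep_def
    apply (rule rc1_sum[where f="\<lambda>c k. if (pstep (lnth c) ^^ k) 0 < llen c then 1 else 0", unfolded pstep_def])
       apply (intro rcI3 rc1_iterp[where S="\<lambda>q c. 2*c + (if lnth (pf q) c = 1 then 2 else 1)"] | simp)+
    done
  show "play_o (lnth (list_encode (pre p n))) i = play_o p i" if "i < play_L (list_encode (pre p n))" for p n i
  proof -
    let ?lk = "lnth (list_encode (pre p n))"
    have ag: "\<forall>j<n. p j = ?lk j" by (simp add: lnth_pre)
    have lt: "pcl p i < n" using that cnt_char by (simp add: play_L_pre)
    then have "pcl p i = pcl ?lk i" using pcl_agree[OF ag] by blast
    then show ?thesis using lt ag by (simp add: play_o_def)
  qed
  show "m \<le> n \<Longrightarrow> play_L (list_encode (pre p m)) \<le> play_L (list_encode (pre p n))" for p m n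
    unfolding play_L_pre cnt_def by (rule card_mono) (auto intro: finite_subset[OF cnt_set])
  show "\<exists>n. k \<le> play_L (list_encode (pre p n))" for p k
  proof (rule exI[of _ "Suc (pcl p k)"])
    have sub: "{..<Suc k} \<subseteq> {j. pcl p j < Suc (pcl p k)}" using pcl_mono[of _ k p] by (auto simp: less_Suc_eq_le)
    have "Suc k \<le> cnt p (Suc (pcl p k))" unfolding cnt_def
      using card_mono[OF finite_subset[OF cnt_set[of p "Suc (pcl p k)"] finite_lessThan] sub] by simp
    then show "k \<le> play_L (list_encode (pre p (Suc (pcl p k))))" by (simp add: play_L_pre)
  qed
qed



definition par :: "nat \<Rightarrow> nat" where "par c = (c - 1) div 2"
definition wlen :: "nat \<Rightarrow> nat" where "wlen c = (\<Sum>k<c. if (par ^^ k) c = 0 then 0 else 1)"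
definition wbit :: "nat \<Rightarrow> nat \<Rightarrow> bool" where
  "wbit c i = ((par ^^ (wlen c - Suc i)) c \<noteq> 0 \<and> even ((par ^^ (wlen c - Suc i)) c))"

lemma bcode_snoc: "bcode (w @ [b]) = 2 * bcode w + (if b then 2 else 1)"
  by (simp add: bcode_def)
lemma bcode_0: "bcode w = 0 \<longleftrightarrow> w = []"
  by (induction w rule: rev_induct) (auto simp: bcode_snoc, simp add: bcode_def)
lemma par_snoc: "par (bcode (w @ [b])) = bcode w"
  by (simp add: bcode_snoc par_def)
lemma par_iter: "(par ^^ k) (bcode w) = bcode (take (length w - k) w)"
proof (induction k)
  case 0 then show ?case by simp
next
  case (Suc k)
  show ?case
  proof (cases "length w - k")
    case 0
    then have "length w - Suc k = 0" by simp
    then show ?thesis using Suc 0 by (simp add: par_def bcode_def)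
  next
    case (Suc m)
    then have "take (length w - k) w = take m w @ [w ! m]"
      by (metis Suc_diff_Suc Suc_leI Suc_le_lessD diff_less_Suc le_less take_Suc_conv_app_nth zero_less_diff
          diff_diff_cancel diff_le_self lessI)
    moreover have "length w - Suc k = m" using Suc by simp
    ultimately show ?thesis using Suc.IH by (simp add: par_snoc)
  qed
qed
lemma len_le_bcode: "length w \<le> bcode w"
  apply (induction w rule: rev_induct)
   apply (simp add: bcode_def)
  apply (simp add: bcode_snoc)
  done
lemma wlen_bcode[simp]: "wlen (bcode w) = length w"
proof -
  have "wlen (bcode w) = (\<Sum>k<bcode w. if k < length w then 1 else 0)"
    unfolding wlen_def par_iter bcode_0 by (intro sum.cong) auto
  also have "\<dots> = card ({..<bcode w} \<inter> {k. k < length w})" by (simp add: sum.If_cases)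
  also have "{..<bcode w} \<inter> {k. k < length w} = {..<length w}" using len_le_bcode[of w] by auto
  finally show ?thesis by simp
qed
lemma wbit_bcode: "i < length w \<Longrightarrow> wbit (bcode w) i = w ! i"
proof -
  assume i: "i < length w"
  have "(par ^^ (length w - Suc i)) (bcode w) = bcode (take (Suc i) w)"
    using i by (simp add: par_iter)
  also have "take (Suc i) w = take i w @ [w ! i]" using i by (simp add: take_Suc_conv_app_nth)
  finally show ?thesis by (simp add: wbit_def bcode_snoc)
qed

lemma rc1_par: "rc1 a \<Longrightarrow> rc1 (\<lambda>x. par (a x))" unfolding par_def by (intro rcI3)
lemma rc1_par_iter: "rc1 a \<Longrightarrow> rc1 b \<Longrightarrow> rc1 (\<lambda>x. (par ^^ b x) (a x))"
  by (rule rc1_iterp[where S="\<lambda>_. par"]) (intro rc1_par rcI3)+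
lemma rc1_wlen: "rc1 a \<Longrightarrow> rc1 (\<lambda>x. wlen (a x))"
proof -
  assume a: "rc1 a"
  have "rc1 wlen" unfolding wlen_def
    by (rule rc1_sum[where f="\<lambda>c k. if (par ^^ k) c = 0 then 0 else 1"]) (rule rc1_if, rule rcb_eq, rule rc1_par_iter, rule rc1_pf'[OF rc1_id], rule rc1_ps'[OF rc1_id], rule rc1_const, rule rc1_const, rule rc1_const, rule rc1_id)
  then show ?thesis using rc1_comp1 a by blast
qed
lemma rcb_wbit: "rc1 a \<Longrightarrow> rc1 b \<Longrightarrow> rcb (\<lambda>x. wbit (a x) (b x))"
  unfolding wbit_def by (intro rcI3 rc1_par_iter rc1_wlen)

lemma rcb_if: "rcb P \<Longrightarrow> rcb Q \<Longrightarrow> rcb R \<Longrightarrow> rcb (\<lambda>x. if P x then Q x else R x)"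
proof -
  assume "rcb P" "rcb Q" "rcb R"
  then have "rcb (\<lambda>x. (P x \<and> Q x) \<or> (\<not> P x \<and> R x))" by (intro rcI3)
  then show ?thesis by (smt (verit, best) rcb_def rc1_def)
qed

lemmas rcI4 = rcI3 rc1_par rc1_par_iter rc1_wlen rcb_wbit rcb_if

definition cg :: "nat \<Rightarrow> nat \<Rightarrow> nat" where "cg t c = 4 * pe t c + 1"
definition ce :: "nat \<Rightarrow> nat \<Rightarrow> nat" where "ce t c = 4 * pe t c + 3"
definition Mx :: "nat \<Rightarrow> nat \<Rightarrow> nat" where "Mx t c = 4 * pe t (2*c+2) + 3"

definition okb :: "(nat \<Rightarrow> nat) \<Rightarrow> (nat \<Rightarrow> bool) \<Rightarrow> nat \<Rightarrow> nat \<Rightarrow> bool" where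
  "okb lk X t c \<longleftrightarrow>
    (X (ce t c) \<longleftrightarrow> (lk (2*t+1) = Suc c \<or> (0 < t \<and> X (ce (t-1) c)) \<or> (0 < c \<and> X (ce t (par c)))))
  \<and> (X (cg t c) \<longleftrightarrow> (X (ce t c) \<or> (0 < t \<and> (X (cg (t-1) c)
        \<or> (lk (2*c) = 1 \<and> X (cg (t-1) (2*c+1)) \<and> X (cg (t-1) (2*c+2)))
        \<or> (\<not> lk (2*c) = 1 \<and> (X (cg (t-1) (2*c+1)) \<or> X (cg (t-1) (2*c+2))))))))
  \<and> (lk (2*c) = 1 \<longrightarrow> (if X (2*c) then (X (cg t (2*c+2)) \<longrightarrow> X (cg t (2*c+1)))
                            else (X (cg t (2*c+1)) \<longrightarrow> X (cg t (2*c+2)))))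
  \<and> (\<not> lk (2*c) = 1 \<longrightarrow> (if X (2*c) then (X (cg t (2*c+1)) \<longrightarrow> X (cg t (2*c+2)))
                            else (X (cg t (2*c+2)) \<longrightarrow> X (cg t (2*c+1)))))"

definition Cset :: "(nat \<Rightarrow> nat) \<Rightarrow> (nat \<Rightarrow> bool) set" where
  "Cset lk = {x. \<forall>t c. okb lk x t c}"

lemma okb_cong_X:
  assumes "\<And>i. i \<le> Mx t c \<Longrightarrow> X i = Y i"
  shows "okb lk X t c = okb lk Y t c"
proof -
  let ?P = "pe t (2*c+2)"
  have pc: "par c \<le> c" by (simp add: par_def)
  have m1: "pe t c \<le> ?P" "pe (t-1) c \<le> ?P" "pe t (par c) \<le> ?P" "pe (t-1) (2*c+1) \<le> ?P"
    "pe (t-1) (2*c+2) \<le> ?P" "pe t (2*c+1) \<le> ?P"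
    using pc by (auto intro!: pe_mono)
  have c2: "c \<le> ?P" using pe_ge2[of "2*c+2" t] by simp
  have b: "ce t c \<le> Mx t c" "ce (t-1) c \<le> Mx t c" "ce t (par c) \<le> Mx t c" "cg t c \<le> Mx t c"
    "cg (t-1) c \<le> Mx t c" "cg (t-1) (2*c+1) \<le> Mx t c" "cg (t-1) (2*c+2) \<le> Mx t c"
    "cg t (2*c+1) \<le> Mx t c" "cg t (2*c+2) \<le> Mx t c" "2*c \<le> Mx t c"
    using m1 c2 unfolding ce_def cg_def Mx_def by linarith+
  have e: "X (ce t c) = Y (ce t c)" "X (ce (t-1) c) = Y (ce (t-1) c)" "X (ce t (par c)) = Y (ce t (par c))"
    "X (cg t c) = Y (cg t c)" "X (cg (t-1) c) = Y (cg (t-1) c)"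
    "X (cg (t-1) (2*c+1)) = Y (cg (t-1) (2*c+1))" "X (cg (t-1) (2*c+2)) = Y (cg (t-1) (2*c+2))"
    "X (cg t (2*c+1)) = Y (cg t (2*c+1))" "X (cg t (2*c+2)) = Y (cg t (2*c+2))" "X (2*c) = Y (2*c)"
    using b by (simp_all add: assms)
  show ?thesis unfolding okb_def e ..
qed

lemma okb_cong_lk:
  "lk (2*t+1) = lk' (2*t+1) \<Longrightarrow> lk (2*c) = lk' (2*c) \<Longrightarrow> okb lk X t c = okb lk' X t c"
  unfolding okb_def by simp

definition oc :: "(nat \<Rightarrow> nat) \<Rightarrow> nat \<Rightarrow> nat" where
  "oc lk m = (if 2 * pf (ps m) + 1 < m \<and> 2 * pf (ps (ps m)) < m \<and> Mx (pf (ps m)) (pf (ps (ps m))) < wlen (ps (ps (ps m)))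
      \<and> \<not> okb lk (wbit (ps (ps (ps m)))) (pf (ps m)) (pf (ps (ps m))) then Suc (ps (ps (ps m))) else 0)"

lemma open_oc: "open_of (oc lk) = - Cset lk"
proof (intro equalityI subsetI)
  fix x assume "x \<in> open_of (oc lk)"
  then obtain w n where wn: "oc lk n = Suc (bcode w)" "x \<in> cyl w" unfolding open_of_def by blast
  define t where "t = pf (ps n)" define c where "c = pf (ps (ps n))"
  have wc: "ps (ps (ps n)) = bcode w" and cond: "Mx t c < wlen (bcode w)" "\<not> okb lk (wbit (bcode w)) t c"
    using wn(1) unfolding oc_def t_def c_def by (auto split: if_splits)
  have "okb lk (wbit (bcode w)) t c = okb lk x t c"
  proof (rule okb_cong_X)
    fix i assume "i \<le> Mx t c"
    then have "i < length w" using cond by simp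
    then show "wbit (bcode w) i = x i" using wn(2) by (simp add: wbit_bcode cyl_def)
  qed
  then show "x \<in> - Cset lk" using cond by (auto simp: Cset_def)
next
  fix x assume "x \<in> - Cset lk"
  then obtain t c where bad: "\<not> okb lk x t c" by (auto simp: Cset_def)
  define w where "w = map x [0..<Suc (Mx t c)]"
  define m where "m = pe (2*t + 2*c + 2) (pe t (pe c (bcode w)))"
  have "2*t + 2*c + 2 \<le> m" unfolding m_def by (rule pe_ge1)
  moreover have "okb lk (wbit (bcode w)) t c = okb lk x t c"
    by (rule okb_cong_X) (simp add: w_def wbit_bcode del: upt_Suc)
  ultimately have "oc lk m = Suc (bcode w)" using bad by (simp add: oc_def m_def w_def del: upt_Suc)
  moreover have "x \<in> cyl w" by (simp add: cyl_def w_def del: upt_Suc)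
  ultimately show "x \<in> open_of (oc lk)" unfolding open_of_def by blast
qed

definition cw_h :: "nat list \<Rightarrow> nat list" where
  "cw_h xs = map (oc (lnth (list_encode xs))) [0..<llen (list_encode xs)]"

lemma cw_ok: "wf_ok cw_h oc"
  unfolding cw_h_def
proof (rule wf_map)
  show "rc1 (\<lambda>q. oc (lnth (pf q)) (ps q))" unfolding oc_def okb_def Mx_def ce_def cg_def
    by (intro rcI4)
  show "rc1 llen" by (rule rc1_llen[OF rc1_id])
  show "oc (lnth (list_encode (pre p n))) i = oc p i" if "i < llen (list_encode (pre p n))" for p n i
  proof -
    have i: "i < n" using that by simp
    show ?thesis
    proof (cases "2 * pf (ps i) + 1 < i \<and> 2 * pf (ps (ps i)) < i")
      case True
      then have "okb (lnth (list_encode (pre p n))) X (pf (ps i)) (pf (ps (ps i))) = okb p X (pf (ps i)) (pf (ps (ps i)))" for X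
        using i by (intro okb_cong_lk) (simp_all add: lnth_pre)
      then show ?thesis unfolding oc_def by simp
    next
      case False
      then show ?thesis unfolding oc_def by auto
    qed
  qed
  show "m \<le> n \<Longrightarrow> llen (list_encode (pre p m)) \<le> llen (list_encode (pre p n))" for p m n by simp
  show "\<exists>n. k \<le> llen (list_encode (pre p n))" for p k by (rule exI[of _ k]) simp
qed



definition gd :: "baire \<Rightarrow> bool list \<Rightarrow> player" where
  "gd r w = (if r (2 * bcode w) = 1 then P1 else P2)"
definition gW :: "baire \<Rightarrow> (nat \<Rightarrow> bool) set" where
  "gW r = - open_of (\<lambda>n. r (2 * n + 1))"

lemma bcode_Nil[simp]: "bcode [] = 0" by (simp add: bcode_def)
lemma pc_Suc: "bcode (map y [0..<Suc n]) = 2 * bcode (map y [0..<n]) + (if y n then 2 else 1)"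
  by (simp add: bcode_snoc)
lemma pc_0: "bcode (map y [0..<0]) = 0" by (simp add: bcode_def)

lemma okbD: "x \<in> Cset r \<Longrightarrow> okb r x t c" by (simp add: Cset_def)

lemma okE: "x \<in> Cset r \<Longrightarrow> x (ce t c) \<longleftrightarrow> (r (2*t+1) = Suc c \<or> (0 < t \<and> x (ce (t-1) c)) \<or> (0 < c \<and> x (ce t (par c))))"
  using okbD[of x r t c] unfolding okb_def by (rule conjunct1)
lemma okG: "x \<in> Cset r \<Longrightarrow> x (cg t c) \<longleftrightarrow> (x (ce t c) \<or> (0 < t \<and> (x (cg (t-1) c)
        \<or> (r (2*c) = 1 \<and> x (cg (t-1) (2*c+1)) \<and> x (cg (t-1) (2*c+2)))
        \<or> (\<not> r (2*c) = 1 \<and> (x (cg (t-1) (2*c+1)) \<or> x (cg (t-1) (2*c+2)))))))"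
  using okbD[of x r t c] unfolding okb_def by (rule conjunct1[OF conjunct2])
lemma okS1: "x \<in> Cset r \<Longrightarrow> r (2*c) = 1 \<Longrightarrow> (if x (2*c) then (x (cg t (2*c+2)) \<longrightarrow> x (cg t (2*c+1)))
                            else (x (cg t (2*c+1)) \<longrightarrow> x (cg t (2*c+2))))"
  using okbD[of x r t c] unfolding okb_def by (metis (no_types, lifting))
lemma okS2: "x \<in> Cset r \<Longrightarrow> \<not> r (2*c) = 1 \<Longrightarrow> (if x (2*c) then (x (cg t (2*c+1)) \<longrightarrow> x (cg t (2*c+2)))
                            else (x (cg t (2*c+2)) \<longrightarrow> x (cg t (2*c+1))))"
  using okbD[of x r t c] unfolding okb_def by (metis (no_types, lifting))

lemma E_open:
  assumes x: "x \<in> Cset r"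
  shows "x (ce t c) \<Longrightarrow> bcode (map y [0..<n]) = c \<Longrightarrow> y \<in> open_of (\<lambda>n. r (2 * n + 1))"
proof (induction "t + c" arbitrary: t c n rule: less_induct)
  case less
  have o: "x (ce t c) \<longleftrightarrow> (r (2*t+1) = Suc c \<or> (0 < t \<and> x (ce (t-1) c)) \<or> (0 < c \<and> x (ce t (par c))))"
    using okE[OF x] by blast
  then consider "r (2*t+1) = Suc c" | "0 < t" "x (ce (t-1) c)" | "0 < c" "x (ce t (par c))"
    using less.prems by blast
  then show ?case
  proof cases
    case 1
    then have "y \<in> cyl (map y [0..<n])" "\<exists>k. r (2*k+1) = Suc (bcode (map y [0..<n]))"
      using less.prems by (auto simp: cyl_def)
    then show ?thesis unfolding open_of_def by blast
  next
    case 2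
    then have "t - 1 + c < t + c" by simp
    from less.hyps[OF this 2(2) less.prems(2)] show ?thesis .
  next
    case 3
    have "n \<noteq> 0"
    proof
      assume "n = 0" then have "c = 0" using less.prems(2) by simp
      then show False using 3 by simp
    qed
    then obtain n' where n': "n = Suc n'" by (cases n) auto
    have "bcode (map y [0..<n'] @ [y n']) = c" using less.prems(2) n' by simp
    then have pc: "par c = bcode (map y [0..<n'])" using par_snoc[of "map y [0..<n']" "y n'"] by simp
    have "par c < c" using 3 by (simp add: par_def)
    then have "t + par c < t + c" by simp
    from less.hyps[OF this 3(2) pc[symmetric]] show ?thesis .
  qed
qed

lemma G_open:
  assumes x: "x \<in> Cset r" and cons: "consistent (gd r) (\<lambda>w. x (2 * bcode w)) P2 y"
  shows "x (cg t c) \<Longrightarrow> bcode (map y [0..<n]) = c \<Longrightarrow> y \<in> open_of (\<lambda>n. r (2 * n + 1))"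
proof (induction t arbitrary: c n)
  case 0
  have n0: "\<not> (0::nat) < 0" by simp
  have "x (ce 0 c)" using okG[OF x, of 0 c] 0(1) n0 by blast
  then show ?case using E_open[OF x] 0 by blast
next
  case (Suc t)
  have child: "bcode (map y [0..<Suc n]) = (if y n then 2*c+2 else 2*c+1)"
    using Suc.prems(2) by (simp add: bcode_snoc)
  have o: "x (ce (Suc t) c) \<or> x (cg t c)
        \<or> (r (2*c) = 1 \<and> x (cg t (2*c+1)) \<and> x (cg t (2*c+2)))
        \<or> (\<not> r (2*c) = 1 \<and> (x (cg t (2*c+1)) \<or> x (cg t (2*c+2))))"
    using okG[OF x, of "Suc t" c] Suc.prems(1) unfolding diff_Suc_1 by blast
  have IHc: "y \<in> open_of (\<lambda>n. r (2 * n + 1))" if "x (cg t (if y n then 2*c+2 else 2*c+1))"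
    using Suc.IH[OF that child] .
  from o consider "x (ce (Suc t) c)" | "x (cg t c)" | "r (2*c) = 1" "x (cg t (2*c+1))" "x (cg t (2*c+2))"
    | "\<not> r (2*c) = 1" "x (cg t (2*c+1)) \<or> x (cg t (2*c+2))" by blast
  then show ?case
  proof cases
    case 1 then show ?thesis using E_open[OF x 1 Suc.prems(2)] by blast
  next
    case 2 then show ?thesis using Suc.IH[OF 2 Suc.prems(2)] by blast
  next
    case 3 then show ?thesis using IHc by (cases "y n") simp_all
  next
    case 4
    have s: "if x (2*c) then (x (cg t (2*c+1)) \<longrightarrow> x (cg t (2*c+2)))
                            else (x (cg t (2*c+2)) \<longrightarrow> x (cg t (2*c+1)))"
      using okS2[OF x 4(1)] by blast
    have "gd r (map y [0..<n]) = P2" using 4 Suc.prems(2) by (simp add: gd_def)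
    then have yn: "y n = x (2*c)" using cons Suc.prems(2) unfolding consistent_def by auto
    have "x (cg t (if y n then 2*c+2 else 2*c+1))"
    proof (cases "y n")
      case True then show ?thesis using s yn 4(2) by auto
    next
      case False then show ?thesis using s yn 4(2) by auto
    qed
    then show ?thesis using IHc by blast
  qed
qed

lemma P1_step:
  assumes x: "x \<in> Cset r" and nc: "\<forall>t. \<not> x (cg t c)"
    and yn: "r (2*c) = 1 \<Longrightarrow> b = x (2*c)"
  shows "\<not> x (cg t (if b then 2*c+2 else 2*c+1))"
proof
  assume t: "x (cg t (if b then 2*c+2 else 2*c+1))"
  have g: "(r (2*c) = 1 \<and> x (cg t (2*c+1)) \<and> x (cg t (2*c+2)))
        \<or> (\<not> r (2*c) = 1 \<and> (x (cg t (2*c+1)) \<or> x (cg t (2*c+2)))) \<Longrightarrow> x (cg (Suc t) c)"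
    using okG[OF x, of "Suc t" c] unfolding diff_Suc_1 by blast
  have s: "r (2*c) = 1 \<longrightarrow> (if x (2*c) then (x (cg t (2*c+2)) \<longrightarrow> x (cg t (2*c+1)))
                            else (x (cg t (2*c+1)) \<longrightarrow> x (cg t (2*c+2))))"
    using okS1[OF x] by blast
  have "x (cg (Suc t) c)"
  proof (cases "r (2*c) = 1")
    case True
    then have "b = x (2*c)" using yn by blast
    then show ?thesis using True s t g by (cases b) auto
  next
    case False
    then show ?thesis using g t by (cases b) auto
  qed
  then show False using nc by blast
qed

lemma P1_safe:
  assumes x: "x \<in> Cset r" and cons: "consistent (gd r) (\<lambda>w. x (2 * bcode w)) P1 y"
    and root: "\<forall>t. \<not> x (cg t 0)"
  shows "\<forall>t. \<not> x (cg t (bcode (map y [0..<n])))"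
proof (induction n)
  case 0 then show ?case using root by (simp add: pc_0)
next
  case (Suc n)
  define c where "c = bcode (map y [0..<n])"
  have nc: "\<forall>t. \<not> x (cg t c)" using Suc.IH c_def by simp
  have yn: "y n = x (2*c)" if "r (2*c) = 1"
  proof -
    have "gd r (map y [0..<n]) = P1" using that by (simp add: gd_def c_def)
    then show ?thesis using cons unfolding consistent_def c_def by auto
  qed
  have e: "bcode (map y [0..<Suc n]) = (if y n then 2*c+2 else 2*c+1)"
    unfolding c_def by (simp add: bcode_snoc)
  show ?case unfolding e using P1_step[OF x nc yn] by blast
qed

lemma NE:
  assumes x: "x \<in> Cset r"
  shows "(\<lambda>w. x (2 * bcode w)) \<in> Det_A (gd r, gW r)"
proof (cases "\<exists>t. x (cg t 0)")
  case True
  then obtain t where t: "x (cg t 0)" by blast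
  have "winning (gd r, gW r) (\<lambda>w. x (2 * bcode w)) P2"
    unfolding winning_def wins_def gW_def
    using G_open[OF x _ t pc_0] by auto
  then show ?thesis by (simp add: Det_A_def)
next
  case False
  have "y \<in> gW r" if cons: "consistent (gd r) (\<lambda>w. x (2 * bcode w)) P1 y" for y
  proof (rule ccontr)
    assume "y \<notin> gW r"
    then obtain w k where wk: "r (2*k+1) = Suc (bcode w)" "y \<in> cyl w"
      unfolding gW_def open_of_def by auto
    have mw: "map y [0..<length w] = w" by (rule nth_equalityI) (use wk(2) in \<open>auto simp: cyl_def\<close>)
    have "x (ce k (bcode w))"
      using okE[OF x, of k "bcode w"] wk(1) by blast
    then have "x (cg k (bcode w))"
      using okG[OF x, of k "bcode w"] by blast
    then have "x (cg k (bcode (map y [0..<length w])))" using mw by simp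
    then show False using P1_safe[OF x cons] False by blast
  qed
  then have "winning (gd r, gW r) (\<lambda>w. x (2 * bcode w)) P1"
    unfolding winning_def wins_def by auto
  then show ?thesis by (simp add: Det_A_def)
qed



definition Er :: "baire \<Rightarrow> nat \<Rightarrow> nat \<Rightarrow> bool" where
  "Er r t c \<longleftrightarrow> (\<exists>k\<le>t. \<exists>j. r (2*k+1) = Suc ((par ^^ j) c))"

fun Gr :: "baire \<Rightarrow> nat \<Rightarrow> nat \<Rightarrow> bool" where
  "Gr r 0 c = Er r 0 c"
| "Gr r (Suc t) c = (Er r (Suc t) c \<or> Gr r t c \<or> (r (2*c) = 1 \<and> Gr r t (2*c+1) \<and> Gr r t (2*c+2))
      \<or> (\<not> r (2*c) = 1 \<and> (Gr r t (2*c+1) \<or> Gr r t (2*c+2))))"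

definition Sr :: "baire \<Rightarrow> nat \<Rightarrow> bool" where
  "Sr r c = (if r (2*c) = 1 then (\<forall>t. Gr r t (2*c+2) \<longrightarrow> Gr r t (2*c+1))
                           else (\<forall>t. Gr r t (2*c+1) \<longrightarrow> Gr r t (2*c+2)))"

definition xr :: "baire \<Rightarrow> nat \<Rightarrow> bool" where
  "xr r i = (if even i then Sr r (i div 2) else if i mod 4 = 1 then Gr r (pf ((i-1) div 4)) (ps ((i-1) div 4))
            else Er r (pf ((i-3) div 4)) (ps ((i-3) div 4)))"

lemma xr_cs: "xr r (2*c) = Sr r c" by (simp add: xr_def)
lemma xr_cg: "xr r (cg t c) = Gr r t c"
proof -
  have "\<not> even (4 * pe t c + 1)" by simp
  moreover have "(4 * pe t c + 1) mod 4 = 1" by simp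
  ultimately show ?thesis by (simp add: xr_def cg_def)
qed
lemma xr_ce: "xr r (ce t c) = Er r t c"
proof -
  have "\<not> even (4 * pe t c + 3)" by simp
  moreover have "(4 * pe t c + 3) mod 4 = 3" by simp
  ultimately show ?thesis by (simp add: xr_def ce_def)
qed

lemma par_iter0: "(par ^^ j) 0 = 0"
  by (induction j) (auto simp: par_def)

lemma Er_eq: "Er r t c \<longleftrightarrow> (r (2*t+1) = Suc c \<or> (0 < t \<and> Er r (t-1) c) \<or> (0 < c \<and> Er r t (par c)))"
proof
  assume "Er r t c"
  then obtain k j where kj: "k \<le> t" "r (2*k+1) = Suc ((par ^^ j) c)" unfolding Er_def by blast
  show "r (2*t+1) = Suc c \<or> (0 < t \<and> Er r (t-1) c) \<or> (0 < c \<and> Er r t (par c))"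
  proof (cases "j = 0 \<or> c = 0")
    case True
    then have "(par ^^ j) c = c" using par_iter0 by auto
    then have rk: "r (2*k+1) = Suc c" using kj by simp
    show ?thesis
    proof (cases "k = t")
      case True then show ?thesis using rk by simp
    next
      case False
      then have "k \<le> t - 1" "0 < t" using kj by auto
      then have "Er r (t-1) c" unfolding Er_def using rk by (metis funpow_0)
      then show ?thesis using \<open>0 < t\<close> by blast
    qed
  next
    case False
    then obtain j' where "j = Suc j'" "0 < c" by (cases j) auto
    then have "r (2*k+1) = Suc ((par ^^ j') (par c))" using kj by (simp add: funpow_swap1)
    then have "Er r t (par c)" unfolding Er_def using kj by blast
    then show ?thesis using \<open>0 < c\<close> by blast
  qed
next
  assume "r (2*t+1) = Suc c \<or> (0 < t \<and> Er r (t-1) c) \<or> (0 < c \<and> Er r t (par c))"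
  then show "Er r t c"
  proof (elim disjE conjE)
    assume "r (2*t+1) = Suc c" then show ?thesis unfolding Er_def by (metis funpow_0 order_refl)
  next
    assume "0 < t" "Er r (t-1) c" then show ?thesis unfolding Er_def by (meson diff_le_self le_trans)
  next
    assume "0 < c" "Er r t (par c)"
    then obtain k j where "k \<le> t" "r (2*k+1) = Suc ((par ^^ j) (par c))" unfolding Er_def by blast
    then show ?thesis unfolding Er_def by (metis funpow_Suc_right comp_apply)
  qed
qed

lemma Gr_eq: "Gr r t c \<longleftrightarrow> (Er r t c \<or> (0 < t \<and> (Gr r (t-1) c
        \<or> (r (2*c) = 1 \<and> Gr r (t-1) (2*c+1) \<and> Gr r (t-1) (2*c+2))
        \<or> (\<not> r (2*c) = 1 \<and> (Gr r (t-1) (2*c+1) \<or> Gr r (t-1) (2*c+2))))))"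
  by (cases t) auto

lemma Gr_mono: "Gr r t c \<Longrightarrow> t \<le> t' \<Longrightarrow> Gr r t' c"
proof (induction t' )
  case 0 then show ?case by simp
next
  case (Suc t') then show ?case by (cases "t = Suc t'") (auto simp: le_Suc_eq)
qed

lemma choice_ok:
  "(if (\<forall>t. A t \<longrightarrow> B t) then (A t \<longrightarrow> B t) else (B t \<longrightarrow> A t))"
  if mA: "\<And>t t'. A t \<Longrightarrow> t \<le> t' \<Longrightarrow> A t'" and mB: "\<And>t t'. B t \<Longrightarrow> t \<le> t' \<Longrightarrow> B t'" for A B :: "nat \<Rightarrow> bool" and t
proof (cases "\<forall>t. A t \<longrightarrow> B t")
  case True then show ?thesis by simp
next
  case False
  then obtain t0 where t0: "A t0" "\<not> B t0" by blast
  have "B t \<longrightarrow> A t"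
  proof
    assume "B t"
    have "t0 \<le> t" proof (rule ccontr) assume "\<not> t0 \<le> t" then show False using mB[OF \<open>B t\<close>, of t0] t0 by simp qed
    then show "A t" using mA[OF t0(1)] by blast
  qed
  then show ?thesis using False by simp
qed

lemma xr_ok: "okb r (xr r) t c"
proof -
  have m: "\<And>d t t'. Gr r t d \<Longrightarrow> t \<le> t' \<Longrightarrow> Gr r t' d" using Gr_mono by blast
  have s1: "r (2*c) = 1 \<longrightarrow> (if Sr r c then (Gr r t (2*c+2) \<longrightarrow> Gr r t (2*c+1))
                            else (Gr r t (2*c+1) \<longrightarrow> Gr r t (2*c+2)))"
  proof -
    have "(if (\<forall>t. Gr r t (2*c+2) \<longrightarrow> Gr r t (2*c+1)) then (Gr r t (2*c+2) \<longrightarrow> Gr r t (2*c+1))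
           else (Gr r t (2*c+1) \<longrightarrow> Gr r t (2*c+2)))"
      by (rule choice_ok) (use m in blast)+
    then show ?thesis unfolding Sr_def by (auto split: if_split_asm)
  qed
  have s2: "\<not> r (2*c) = 1 \<longrightarrow> (if Sr r c then (Gr r t (2*c+1) \<longrightarrow> Gr r t (2*c+2))
                            else (Gr r t (2*c+2) \<longrightarrow> Gr r t (2*c+1)))"
  proof -
    have "(if (\<forall>t. Gr r t (2*c+1) \<longrightarrow> Gr r t (2*c+2)) then (Gr r t (2*c+1) \<longrightarrow> Gr r t (2*c+2))
           else (Gr r t (2*c+2) \<longrightarrow> Gr r t (2*c+1)))"
      by (rule choice_ok) (use m in blast)+
    then show ?thesis unfolding Sr_def by (auto split: if_split_asm)
  qed
  show ?thesis unfolding okb_def xr_cs xr_cg xr_ce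
    using Er_eq[of r t c] Gr_eq[of r t c] s1 s2 by blast
qed

lemma Cset_ne: "xr r \<in> Cset r"
  unfolding Cset_def using xr_ok by blast



lemma W_le_intro:
  assumes hK: "wf_ok hK FK" and hH: "wf_ok hH FH"
  and main: "\<And>p x. \<delta>X p = Some x \<Longrightarrow> f x \<noteq> {} \<Longrightarrow>
     \<exists>u. \<delta>U (FH p) = Some u \<and> g u \<noteq> {} \<and>
        (\<forall>q v. \<delta>V q = Some v \<and> v \<in> g u \<longrightarrow> (\<exists>y. \<delta>Y (FK (bpair p q)) = Some y \<and> y \<in> f x))"
  shows "W_le \<delta>X \<delta>Y f \<delta>U \<delta>V g"
  unfolding W_le_def
proof (intro exI conjI allI impI)
  show "pcomputable (\<lambda>p. Some (FK p))" by (rule wf_ok_pcomp[OF hK])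
  show "pcomputable (\<lambda>p. Some (FH p))" by (rule wf_ok_pcomp[OF hH])
  fix G assume G: "realizer \<delta>U \<delta>V g G"
  show "realizer \<delta>X \<delta>Y f (\<lambda>p. case Some (FH p) of None \<Rightarrow> None
      | Some q \<Rightarrow> (case G q of None \<Rightarrow> None | Some r \<Rightarrow> Some (FK (bpair p r))))"
    unfolding realizer_def
  proof (intro allI impI)
    fix p x assume px: "\<delta>X p = Some x \<and> f x \<noteq> {}"
    then obtain u where u: "\<delta>U (FH p) = Some u" "g u \<noteq> {}"
      and uu: "\<forall>q v. \<delta>V q = Some v \<and> v \<in> g u \<longrightarrow> (\<exists>y. \<delta>Y (FK (bpair p q)) = Some y \<and> y \<in> f x)"
      using main by blast
    obtain q v where qv: "G (FH p) = Some q" "\<delta>V q = Some v" "v \<in> g u"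
      using G u unfolding realizer_def by blast
    then obtain y where "\<delta>Y (FK (bpair p q)) = Some y" "y \<in> f x" using uu by blast
    then show "\<exists>q y. (case Some (FH p) of None \<Rightarrow> None
      | Some q \<Rightarrow> (case G q of None \<Rightarrow> None | Some r \<Rightarrow> Some (FK (bpair p r)))) = Some q \<and> \<delta>Y q = Some y \<and> y \<in> f x"
      using qv by auto
  qed
qed

lemma id_ok: "wf_ok (\<lambda>xs. xs) (\<lambda>p. p)"
proof -
  have "comp_wordfun (\<lambda>xs. xs)" by (rule cw_rc[OF rc1_id]) simp
  moreover have "\<exists>n. k \<le> length (pre p n)" for p k by (rule exI[of _ k]) simp
  ultimately show ?thesis unfolding wf_ok_def by simp
qed

definition ilF :: "baire \<Rightarrow> baire" where "ilF = (\<lambda>lk i. if even i then 1 else lk (i div 2))"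
definition odF :: "baire \<Rightarrow> baire" where "odF = (\<lambda>lk i. lk (2*i+1))"
definition evF :: "baire \<Rightarrow> baire" where "evF = (\<lambda>lk i. lk (2*i))"

lemma odF_bpair[simp]: "odF (bpair p q) = q"
  by (simp add: odF_def bpair_def fun_eq_iff)
lemma evF_bpair: "evF (bpair p q) = p"
  by (simp add: evF_def bpair_def fun_eq_iff)

lemma game_of_il: "delta_game (ilF p) = Some ((\<lambda>w. P1), - open_of p)"
proof -
  have "\<forall>n. ilF p (2 * n) \<in> {1, 2}" by (simp add: ilF_def)
  moreover have "(\<lambda>n. ilF p (2 * n + 1)) = p" by (simp add: ilF_def fun_eq_iff)
  ultimately show ?thesis by (simp add: delta_game_def ilF_def)
qed

lemma game_valid: "delta_game p = Some x \<Longrightarrow> x = (gd p, gW p)"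
  by (auto simp: delta_game_def gd_def gW_def fun_eq_iff split: if_splits)

lemma P1_exists: "a \<in> A \<Longrightarrow> \<exists>s. winning ((\<lambda>w. P1), A) s P1"
proof -
  assume a: "a \<in> A"
  have "y \<in> A" if "consistent (\<lambda>w. P1) (\<lambda>w. a (length w)) P1 y" for y
  proof -
    have "y = a" using that by (auto simp: fun_eq_iff consistent_def)
    then show ?thesis using a by simp
  qed
  then have "winning ((\<lambda>w. P1), A) (\<lambda>w. a (length w)) P1"
    by (simp add: winning_def wins_def)
  then show ?thesis by blast
qed

lemma P1_play:
  assumes "A \<noteq> {}" "v \<in> Det_A ((\<lambda>w. P1), A)" "\<And>n. z n = v (map z [0..<n])"
  shows "z \<in> A"
proof -
  obtain a where a: "a \<in> A" using assms(1) by blast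
  have "\<not> winning ((\<lambda>w. P1), A) v P2"
  proof
    assume "winning ((\<lambda>w. P1), A) v P2"
    moreover have "consistent (\<lambda>w. P1) v P2 a" by (simp add: consistent_def)
    ultimately have "a \<notin> A" unfolding winning_def wins_def by auto
    then show False using a by simp
  qed
  then have "winning ((\<lambda>w. P1), A) v P1" using assms(2) by (simp add: Det_A_def)
  moreover have "consistent (\<lambda>w. P1) v P1 z" using assms(3) by (simp add: consistent_def)
  ultimately show ?thesis unfolding winning_def wins_def by auto
qed

lemma play_code: "bcode (map (\<lambda>n. play_o q n = 1) [0..<n]) = pcl q n"
proof (induction n)
  case 0 then show ?case by (simp add: pcl_def)
next
  case (Suc n)
  then show ?case by (simp add: bcode_snoc pcl_Suc pstep_def play_o_def)
qed

lemma play_cons: "(\<lambda>n. play_o q n = 1) n = (\<lambda>w. q (bcode w) = 1) (map (\<lambda>n. play_o q n = 1) [0..<n])"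
  by (simp only: play_code) (simp add: play_o_def)

lemma prof_some: "delta_prof q = Some v \<Longrightarrow> (\<forall>n. q n \<le> 1) \<and> v = (\<lambda>w. q (bcode w) = 1)"
  by (auto simp: delta_prof_def split: if_splits)

lemma play_o_le: "play_o q n \<le> 1" by (simp add: play_o_def)

lemma red1: "W_le delta_game delta_prof FindWS_A delta_game delta_prof Det_A"
proof (rule W_le_intro[OF odds_ok id_ok])
  fix p x assume "delta_game p = Some x" "FindWS_A x \<noteq> {}"
  then have e: "FindWS_A x = Det_A x" by (auto simp: FindWS_A_def split: if_splits)
  show "\<exists>u. delta_game p = Some u \<and> Det_A u \<noteq> {} \<and>
        (\<forall>q v. delta_prof q = Some v \<and> v \<in> Det_A u \<longrightarrow> (\<exists>y. delta_prof ((\<lambda>lk i. lk (2*i+1)) (bpair p q)) = Some y \<and> y \<in> FindWS_A x))"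
    using \<open>delta_game p = Some x\<close> \<open>FindWS_A x \<noteq> {}\<close> e odF_bpair unfolding odF_def by auto
qed

lemma delta_A_oc: "delta_A (oc p) = Some (Cset p)"
  by (simp add: delta_A_def open_oc)

lemma prof_of: "(\<forall>n. q n \<le> 1) \<Longrightarrow> delta_prof q = Some (\<lambda>w. q (bcode w) = 1)"
  by (simp add: delta_prof_def)

lemma red3: "W_le delta_game delta_prof Det_A delta_A delta_C CC"
proof (rule W_le_intro[OF wf_ok_comp[OF odds_ok evens_ok] cw_ok], goal_cases)
  case (1 p x)
  have x: "x = (gd p, gW p)" using game_valid[OF 1(1)] .
  have "\<exists>y. delta_prof ((\<lambda>lk i. lk (2 * i)) ((\<lambda>lk i. lk (2 * i + 1)) (bpair p q))) = Some y \<and> y \<in> Det_A x"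
    if "delta_C q = Some v" "v \<in> CC (Cset p)" for q v
  proof -
    have q: "\<forall>n. q n \<le> 1" "v = (\<lambda>n. q n = 1)" using that(1) by (auto simp: delta_C_def split: if_splits)
    have e: "(\<lambda>lk i. lk (2 * i)) ((\<lambda>lk i. lk (2 * i + 1)) (bpair p q)) = (\<lambda>i. q (2 * i))"
      by (simp add: bpair_def fun_eq_iff)
    have "(\<lambda>w. v (2 * bcode w)) \<in> Det_A x" using NE[of v p] that(2) x by (simp add: CC_def)
    then show ?thesis unfolding e using q by (simp add: prof_of)
  qed
  moreover have "CC (Cset p) \<noteq> {}" using Cset_ne[of p] by (auto simp: CC_def)
  ultimately show ?case using delta_A_oc by blast
qed

lemma red4: "W_le delta_A delta_C CC delta_game delta_prof Det_A"
proof (rule W_le_intro[OF wf_ok_comp[OF odds_ok play_ok] il_ok], goal_cases)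
  case (1 p x)
  have x: "x = - open_of p" "x \<noteq> {}" using 1 by (auto simp: delta_A_def CC_def)
  have g: "delta_game ((\<lambda>lk i. if even i then 1 else lk (i div 2)) p) = Some ((\<lambda>w. P1), x)"
    using game_of_il[of p] x by (simp add: ilF_def)
  have ne: "Det_A ((\<lambda>w. P1), x) \<noteq> {}" using P1_exists[of _ x] x(2) by (auto simp: Det_A_def)
  have "\<exists>y. delta_C (play_o ((\<lambda>lk i. lk (2 * i + 1)) (bpair p q))) = Some y \<and> y \<in> CC x"
    if "delta_prof q = Some v" "v \<in> Det_A ((\<lambda>w. P1), x)" for q v
  proof -
    have q: "\<forall>n. q n \<le> 1" "v = (\<lambda>w. q (bcode w) = 1)" using prof_some[OF that(1)] by auto
    have e: "(\<lambda>lk i. lk (2 * i + 1)) (bpair p q) = q" using odF_bpair unfolding odF_def .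
    have "(\<lambda>n. play_o q n = 1) \<in> x"
      by (rule P1_play[OF x(2) that(2)]) (unfold q(2), rule play_cons)
    then show ?thesis unfolding e CC_def delta_C_def using play_o_le by auto
  qed
  then show ?case using g ne by blast
qed

lemma red2: "W_le delta_game delta_prof Det_A delta_game delta_prof FindWS_A"
proof (rule W_le_intro[OF wf_ok_comp[OF wf_ok_comp[OF odds_ok play_ok] evens_ok] wf_ok_comp[OF cw_ok il_ok]], goal_cases)
  case (1 p x)
  have x: "x = (gd p, gW p)" using game_valid[OF 1(1)] .
  have g: "delta_game ((\<lambda>lk i. if even i then 1 else lk (i div 2)) (oc p)) = Some ((\<lambda>w. P1), Cset p)"
    using game_of_il[of "oc p"] by (simp add: ilF_def open_oc)
  have ws: "\<exists>s. winning ((\<lambda>w. P1), Cset p) s P1" using P1_exists[OF Cset_ne] .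
  then have e: "FindWS_A ((\<lambda>w. P1), Cset p) = Det_A ((\<lambda>w. P1), Cset p)" by (simp add: FindWS_A_def)
  have ne: "FindWS_A ((\<lambda>w. P1), Cset p) \<noteq> {}" using ws e by (auto simp: Det_A_def)
  have "\<exists>y. delta_prof ((\<lambda>lk i. lk (2 * i)) (play_o ((\<lambda>lk i. lk (2 * i + 1)) (bpair p q)))) = Some y \<and> y \<in> Det_A x"
    if "delta_prof q = Some v" "v \<in> FindWS_A ((\<lambda>w. P1), Cset p)" for q v
  proof -
    have q: "\<forall>n. q n \<le> 1" "v = (\<lambda>w. q (bcode w) = 1)" using prof_some[OF that(1)] by auto
    have e2: "(\<lambda>lk i. lk (2 * i + 1)) (bpair p q) = q" using odF_bpair unfolding odF_def .
    have "(\<lambda>n. play_o q n = 1) \<in> Cset p"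
    proof (rule P1_play)
      show "Cset p \<noteq> {}" using Cset_ne by blast
      show "v \<in> Det_A ((\<lambda>w. P1), Cset p)" using that(2) e by simp
      show "(\<lambda>n. play_o q n = 1) n = v (map (\<lambda>n. play_o q n = 1) [0..<n])" for n
        unfolding q(2) by (rule play_cons)
    qed
    then have "(\<lambda>w. (\<lambda>n. play_o q n = 1) (2 * bcode w)) \<in> Det_A x" using NE x by simp
    moreover have "\<forall>n. (\<lambda>i. play_o q (2 * i)) n \<le> 1" using play_o_le by simp
    ultimately show ?thesis unfolding e2 using prof_of by auto
  qed
  then show ?case using g ne by blast
qed

theorem theorem9:
  shows "W_eq delta_game delta_prof FindWS_A delta_game delta_prof Det_A
       \<and> W_eq delta_game delta_prof Det_A delta_A delta_C CC"
  unfolding W_eq_def using red1 red2 red3 red4 by blast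


end
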